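(* Let $\{P_t\}_{t\ge0}$ be a stochastically continuous Markov semigroup on $C_b(H)$ with generator $(K,D(K))$, let $\mu\in\mathcal M(H)$ and let $\{\mu_t\}_{t\ge0}$ be a solution of the measure equation $\frac{d}{dt}\int_H\varphi\,d\mu_t=\int_HK\varphi\,d\mu_t$ ($\varphi\in D(K)$), $\mu_0=\mu$. Let $T>0$ and let $u:[0,T]\times H\to\mathbb R$ satisfy: (i) $u\in C_b([0,T]\times H)$; (ii) $u(t,\cdot)\in D(K)$ for every $t\in[0,T]$ and $(t,x)\mapsto Ku(t,x)$ is continuous and bounded on $[0,T]\times H$; (iii) for every $x$ the function $u(\cdot,x)$ is differentiable with derivative $u_t(\cdot,x)$, and $(t,x)\mapsto u_t(t,x)$ is continuous and bounded on $[0,T]\times H$. Then the map $[0,T]\to\mathbb R$, $t\mapsto\int_Hu(t,x)\mu_t(dx)$ is absolutely continuous and for every $t\in[0,T]$ $$\int_Hu(t,x)\mu_t(dx)-\int_Hu(0,x)\mu(dx)=\int_0^t\Big(\int_H\big(u_s(s,x)+Ku(s,x)\big)\mu_s(dx)\Big)ds.$$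
   Context: $H$ is a real separable Hilbert space; $C_b(H)$ is the space of uniformly continuous bounded real functions on $H$ with sup norm $\|\cdot\|_0$; $C_b([0,T]\times H)$ the uniformly continuous bounded real functions on $[0,T]\times H$; $\mathcal M(H)$ the finite Borel measures on $H$ with total variation $\|\cdot\|_{TV}$. Stochastically continuous Markov semigroup: $P_t\varphi(x)=\int_H\varphi(y)\pi_t(x,dy)$ with Borel probability kernels $\pi_t(x,\cdot)$, $(t,x)\mapsto\pi_t(x,\Gamma)$ measurable, $\pi_{t+s}(x,\Gamma)=\int_H\pi_s(y,\Gamma)\pi_t(x,dy)$, $\pi_0(x,\cdot)=\delta_x$, $t\mapsto P_t\varphi(x)$ continuous. Generator: $\varphi\in D(K)$ iff $(P_t\varphi(x)-\varphi(x))/t\to g(x)$ for all $x$ with $g\in C_b(H)$ and $\sup_{t\in(0,1)}\|(P_t\varphi-\varphi)/t\|_0<\infty$; $K\varphi=g$. A solution of the measure equation is a family $\{\mu_t\}_{t\ge0}\subset\mathcal M(H)$ with $\int_0^{T'}\|\mu_t\|_{TV}dt<\infty$ for all $T'>0$, such that for every $\varphi\in D(K)$ the map $t\mapsto\int_H\varphi\,d\mu_t$ is absolutely continuous and $\int_H\varphi\,d\mu_t-\int_H\varphi\,d\mu=\int_0^t\int_HK\varphi\,d\mu_s\,ds$ for all $t\ge0$. *)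

theory Defs
  imports "HOL-Analysis.Analysis" "HOL-Probability.Probability"
begin

text \<open>Real separable Hilbert space: a type of class real_inner, complete_space,
  second_countable_topology (separable for metric spaces).\<close>

definition Cb :: "('a::metric_space \<Rightarrow> real) set" where
  "Cb = {f. uniformly_continuous_on UNIV f \<and> bounded (range f)}"

definition CbT :: "real \<Rightarrow> (real \<Rightarrow> 'a::metric_space \<Rightarrow> real) set" where
  "CbT T = {u. uniformly_continuous_on ({0..T} \<times> UNIV) (\<lambda>(t,x). u t x)
               \<and> bounded ((\<lambda>(t,x). u t x) ` ({0..T} \<times> UNIV))}"

text \<open>Finite signed Borel measures, represented as a difference M1 - M2 of
  two finite (nonnegative) Borel measures.\<close>
type_synonym 'a smeasure = "'a measure \<times> 'a measure"

definition fin_smeasure :: "'a::topological_space smeasure \<Rightarrow> bool" where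
  "fin_smeasure m \<longleftrightarrow> finite_measure (fst m) \<and> finite_measure (snd m)
     \<and> sets (fst m) = sets borel \<and> sets (snd m) = sets borel"

definition smeas :: "'a smeasure \<Rightarrow> 'a set \<Rightarrow> real" where
  "smeas m A = measure (fst m) A - measure (snd m) A"

definition sint :: "'a smeasure \<Rightarrow> ('a \<Rightarrow> real) \<Rightarrow> real" where
  "sint m f = (\<integral>x. f x \<partial>(fst m)) - (\<integral>x. f x \<partial>(snd m))"

definition tv :: "'a::topological_space smeasure \<Rightarrow> real" where
  "tv m = (SUP A \<in> sets borel. smeas m A - smeas m (UNIV - A))"

definition abs_cont_on :: "real \<Rightarrow> real \<Rightarrow> (real \<Rightarrow> real) \<Rightarrow> bool" where
  "abs_cont_on a b f \<longleftrightarrow>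
     (\<forall>\<epsilon>>0. \<exists>\<delta>>0. \<forall>(n::nat) (l::nat \<Rightarrow> real) r.
        (\<forall>i<n. a \<le> l i \<and> l i \<le> r i \<and> r i \<le> b)
        \<and> (\<forall>i<n. \<forall>j<n. i \<noteq> j \<longrightarrow> r i \<le> l j \<or> r j \<le> l i)
        \<and> (\<Sum>i<n. r i - l i) < \<delta>
        \<longrightarrow> (\<Sum>i<n. \<bar>f (r i) - f (l i)\<bar>) < \<epsilon>)"

definition Psg :: "(real \<Rightarrow> 'a \<Rightarrow> 'a measure) \<Rightarrow> real \<Rightarrow> ('a \<Rightarrow> real) \<Rightarrow> 'a \<Rightarrow> real" where
  "Psg \<pi> t \<phi> x = (\<integral>y. \<phi> y \<partial>(\<pi> t x))"

definition sc_markov_semigroup :: "(real \<Rightarrow> 'a::metric_space \<Rightarrow> 'a measure) \<Rightarrow> bool" where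
  "sc_markov_semigroup \<pi> \<longleftrightarrow>
     (\<forall>t\<ge>0. \<forall>x. prob_space (\<pi> t x) \<and> sets (\<pi> t x) = sets borel)
   \<and> (\<forall>\<Gamma>\<in>sets borel. (\<lambda>(t,x). measure (\<pi> t x) \<Gamma>)
          \<in> borel_measurable (restrict_space borel {0..} \<Otimes>\<^sub>M borel))
   \<and> (\<forall>t\<ge>0. \<forall>s\<ge>0. \<forall>x. \<forall>\<Gamma>\<in>sets borel.
          measure (\<pi> (t + s) x) \<Gamma> = (\<integral>y. measure (\<pi> s y) \<Gamma> \<partial>(\<pi> t x)))
   \<and> (\<forall>x. \<pi> 0 x = return borel x)
   \<and> (\<forall>t\<ge>0. \<forall>\<phi>\<in>Cb. Psg \<pi> t \<phi> \<in> Cb)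
   \<and> (\<forall>\<phi>\<in>Cb. \<forall>x. continuous_on {0..} (\<lambda>t. Psg \<pi> t \<phi> x))"

definition DK :: "(real \<Rightarrow> 'a::metric_space \<Rightarrow> 'a measure) \<Rightarrow> ('a \<Rightarrow> real) set" where
  "DK \<pi> = {\<phi>. \<phi> \<in> Cb \<and>
      (\<exists>g\<in>Cb. \<forall>x. ((\<lambda>t. (Psg \<pi> t \<phi> x - \<phi> x) / t) \<longlongrightarrow> g x) (at_right 0))
      \<and> (\<exists>C. \<forall>t\<in>{0<..<1}. \<forall>x. \<bar>(Psg \<pi> t \<phi> x - \<phi> x) / t\<bar> \<le> C)}"

definition Kgen :: "(real \<Rightarrow> 'a \<Rightarrow> 'a measure) \<Rightarrow> ('a \<Rightarrow> real) \<Rightarrow> 'a \<Rightarrow> real" where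
  "Kgen \<pi> \<phi> x = Lim (at_right 0) (\<lambda>t. (Psg \<pi> t \<phi> x - \<phi> x) / t)"

definition measure_eq_solution ::
  "(real \<Rightarrow> 'a::metric_space \<Rightarrow> 'a measure) \<Rightarrow> 'a smeasure \<Rightarrow> (real \<Rightarrow> 'a smeasure) \<Rightarrow> bool" where
  "measure_eq_solution \<pi> \<mu> \<mu>t \<longleftrightarrow>
     (\<forall>t\<ge>0. fin_smeasure (\<mu>t t))
   \<and> (\<forall>T'>0. set_integrable lborel {0..T'} (\<lambda>t. tv (\<mu>t t)))
   \<and> (\<forall>\<phi>\<in>DK \<pi>.
        (\<forall>T'>0. abs_cont_on 0 T' (\<lambda>t. sint (\<mu>t t) \<phi>))
      \<and> (\<forall>t\<ge>0. set_integrable lborel {0..t} (\<lambda>s. sint (\<mu>t s) (Kgen \<pi> \<phi>))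
             \<and> sint (\<mu>t t) \<phi> - sint \<mu> \<phi>
                 = (\<integral>s\<in>{0..t}. sint (\<mu>t s) (Kgen \<pi> \<phi>) \<partial>lborel)))"

end

theory Submission
  imports Defs
begin


lemma int_le_Hahn:
  fixes h :: "'a \<Rightarrow> real"
  assumes M: "finite_measure M" and N: "finite_measure N" and sN: "sets N = sets M"
    and Y: "Y \<in> sets M" and le: "\<forall>X\<in>sets M. X \<subseteq> Y \<longrightarrow> emeasure N X \<le> emeasure M X"
    and hm: "h \<in> borel_measurable M" and h0: "\<And>x. 0 \<le> h x" and hB: "\<And>x. h x \<le> B"
  shows "(\<integral>x. indicator Y x * h x \<partial>N) \<le> (\<integral>x. indicator Y x * h x \<partial>M)"
proof -
  interpret M: finite_measure M by fact
  interpret N: finite_measure N by fact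
  have B0: "0 \<le> B" using h0 hB order_trans by blast
  have hmN: "h \<in> borel_measurable N" using hm measurable_cong_sets[OF sN refl, of borel] by metis
  have YN: "Y \<in> sets N" using Y sN by simp
  have dle: "density N (indicator Y) \<le> density M (indicator Y)"
  proof (subst le_measure)
    show "sets (density N (indicator Y)) = sets (density M (indicator Y))" using sN by simp
    show "\<forall>A\<in>sets (density N (indicator Y)). emeasure (density N (indicator Y)) A \<le> emeasure (density M (indicator Y)) A"
    proof
      fix A assume "A \<in> sets (density N (indicator Y))"
      then have A: "A \<in> sets M" "A \<in> sets N" using sN by auto
      have "emeasure (density N (indicator Y)) A = emeasure N (Y \<inter> A)"
        using emeasure_restricted[OF YN A(2)] .
      also have "\<dots> \<le> emeasure M (Y \<inter> A)" using le A Y by auto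
      also have "\<dots> = emeasure (density M (indicator Y)) A"
        using emeasure_restricted[OF Y A(1)] by simp
      finally show "emeasure (density N (indicator Y)) A \<le> emeasure (density M (indicator Y)) A" .
    qed
  qed
  have i1: "(\<integral>\<^sup>+x. ennreal (h x) \<partial>density N (indicator Y)) \<le> (\<integral>\<^sup>+x. ennreal (h x) \<partial>density M (indicator Y))"
    by (rule nn_integral_mono_measure[OF _ dle]) (simp add: sN)
  have eN: "(\<integral>\<^sup>+x. ennreal (h x) \<partial>density N (indicator Y)) = (\<integral>\<^sup>+x. ennreal (indicator Y x * h x) \<partial>N)"
    using YN hmN by (subst nn_integral_density) (auto intro!: nn_integral_cong simp: indicator_def)
  have eM: "(\<integral>\<^sup>+x. ennreal (h x) \<partial>density M (indicator Y)) = (\<integral>\<^sup>+x. ennreal (indicator Y x * h x) \<partial>M)"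
    using Y hm by (subst nn_integral_density) (auto intro!: nn_integral_cong simp: indicator_def)
  have bM: "(\<integral>\<^sup>+x. ennreal (indicator Y x * h x) \<partial>M) < top"
  proof -
    have "integrable M (\<lambda>x. indicator Y x * h x)"
      using Y hm h0 hB B0 by (intro M.integrable_const_bound[where B=B]) (auto simp: indicator_def)
    then show ?thesis using h0
      by (simp add: integrable_iff_bounded less_top)
  qed
  have "(\<integral>x. indicator Y x * h x \<partial>N) = enn2real (\<integral>\<^sup>+x. ennreal (indicator Y x * h x) \<partial>N)"
    using YN hmN h0 by (intro integral_eq_nn_integral) auto
  also have "\<dots> \<le> enn2real (\<integral>\<^sup>+x. ennreal (indicator Y x * h x) \<partial>M)"
    using i1 eN eM bM by (intro enn2real_mono) auto
  also have "\<dots> = (\<integral>x. indicator Y x * h x \<partial>M)"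
    using Y hm h0 by (intro integral_eq_nn_integral[symmetric]) auto
  finally show ?thesis .
qed

lemma fin_int:
  fixes f :: "'a::topological_space \<Rightarrow> real"
  assumes "finite_measure M" "sets M = sets borel" "f \<in> borel_measurable borel" "\<And>x. \<bar>f x\<bar> \<le> B"
  shows "integrable M f"
proof -
  interpret finite_measure M by fact
  show ?thesis
    using assms(3,4) measurable_cong_sets[OF assms(2) refl, of borel]
    by (intro integrable_const_bound[where B=B]) auto
qed

lemma sint_bound:
  fixes m :: "'a::topological_space smeasure" and f :: "'a \<Rightarrow> real"
  assumes m: "fin_smeasure m" and fm: "f \<in> borel_measurable borel" and fB: "\<And>x. \<bar>f x\<bar> \<le> B"
  shows "\<bar>sint m f\<bar> \<le> B * tv m"
proof -
  define M1 where "M1 = fst m"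
  define M2 where "M2 = snd m"
  have f1: "finite_measure M1" and f2: "finite_measure M2" and s1: "sets M1 = sets borel" and s2: "sets M2 = sets borel"
    using m unfolding fin_smeasure_def M1_def M2_def by auto
  interpret M1: finite_measure M1 by fact
  interpret M2: finite_measure M2 by fact
  have B0: "0 \<le> B" using fB[of undefined] by linarith
  have s21: "sets M2 = sets M1" using s1 s2 by simp
  obtain Y where Y: "Y \<in> sets M1" and hY: "\<forall>X\<in>sets M1. X \<subseteq> Y \<longrightarrow> emeasure M2 X \<le> emeasure M1 X"
    and hZ: "\<forall>X\<in>sets M1. X \<inter> Y = {} \<longrightarrow> emeasure M1 X \<le> emeasure M2 X"
    using finite_unsigned_Hahn_decomposition[OF f1 f2 s21] by blast
  define Z where "Z = UNIV - Y"
  have Yb: "Y \<in> sets borel" using Y s1 by simp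
  have Zb: "Z \<in> sets borel" using Yb unfolding Z_def by auto
  have Z: "Z \<in> sets M1" using Zb s1 by simp
  have hZ': "\<forall>X\<in>sets M2. X \<subseteq> Z \<longrightarrow> emeasure M1 X \<le> emeasure M2 X"
    using hZ s21 unfolding Z_def by auto
  have hY': "\<forall>X\<in>sets M1. X \<subseteq> Y \<longrightarrow> emeasure M2 X \<le> emeasure M1 X" using hY by auto
  have fm1: "f \<in> borel_measurable M1" using fm measurable_cong_sets[OF s1 refl, of borel] by metis
  have fm2: "f \<in> borel_measurable M2" using fm measurable_cong_sets[OF s2 refl, of borel] by metis
  have key: "\<And>M (A::'a set) (c::real). finite_measure M \<Longrightarrow> sets M = sets borel \<Longrightarrow> A \<in> sets borel \<Longrightarrow>
      (\<integral>x. indicator A x * (B + c * f x) \<partial>M) = B * measure M A + c * (\<integral>x. indicator A x * f x \<partial>M)"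
  proof -
    fix M :: "'a measure" and A :: "'a set" and c :: real assume fM: "finite_measure M" and sM: "sets M = sets borel" and A: "A \<in> sets borel"
    have i1: "integrable M (\<lambda>x. B * indicator A x)"
      by (rule fin_int[OF fM sM, where B="\<bar>B\<bar>"]) (use A in \<open>auto simp: indicator_def\<close>)
    have i2: "integrable M (\<lambda>x. c * (indicator A x * f x))"
      by (rule fin_int[OF fM sM, where B="\<bar>c\<bar> * B"]) (use A fm fB B0 in \<open>auto simp: indicator_def abs_mult intro: mult_left_mono\<close>)
    have "(\<integral>x. indicator A x * (B + c * f x) \<partial>M) = (\<integral>x. B * indicator A x + c * (indicator A x * f x) \<partial>M)"
      by (simp add: algebra_simps)
    also have "\<dots> = (\<integral>x. B * indicator A x \<partial>M) + (\<integral>x. c * (indicator A x * f x) \<partial>M)"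
      using i1 i2 by (rule Bochner_Integration.integral_add)
    also have "\<dots> = B * measure M A + c * (\<integral>x. indicator A x * f x \<partial>M)"
      using sets_eq_imp_space_eq[OF sM] by simp
    finally show "(\<integral>x. indicator A x * (B + c * f x) \<partial>M) = B * measure M A + c * (\<integral>x. indicator A x * f x \<partial>M)" .
  qed
  have hmeas: "\<And>c. (\<lambda>x. B + c * f x) \<in> borel_measurable M1" using fm1 by measurable
  have hmeas2: "\<And>c. (\<lambda>x. B + c * f x) \<in> borel_measurable M2" using fm2 by measurable
  have pos: "\<And>c x. c \<in> {-1, 1} \<Longrightarrow> 0 \<le> B + c * f x" proof - fix c x assume "(c::real) \<in> {-1, 1}" then show "0 \<le> B + c * f x" using fB[of x] by (auto simp: abs_le_iff) qed
  have bd: "\<And>c x. c \<in> {-1, 1} \<Longrightarrow> B + c * f x \<le> 2 * B" proof - fix c x assume "(c::real) \<in> {-1, 1}" then show "B + c * f x \<le> 2 * B" using fB[of x] by (auto simp: abs_le_iff) qed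
  have ineqY: "\<And>c. c \<in> {-1,1} \<Longrightarrow> B * measure M2 Y + c * (\<integral>x. indicator Y x * f x \<partial>M2) \<le> B * measure M1 Y + c * (\<integral>x. indicator Y x * f x \<partial>M1)"
  proof -
    fix c :: real assume c: "c \<in> {-1,1}"
    have "(\<integral>x. indicator Y x * (B + c * f x) \<partial>M2) \<le> (\<integral>x. indicator Y x * (B + c * f x) \<partial>M1)"
      by (rule int_le_Hahn[OF f1 f2 s21 Y hY' hmeas pos bd]) (use c in auto)
    then show "?thesis c" using key[OF f1 s1 Yb, of c] key[OF f2 s2 Yb, of c] by simp
  qed
  have ineqZ: "\<And>c. c \<in> {-1,1} \<Longrightarrow> B * measure M1 Z + c * (\<integral>x. indicator Z x * f x \<partial>M1) \<le> B * measure M2 Z + c * (\<integral>x. indicator Z x * f x \<partial>M2)"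
  proof -
    fix c :: real assume c: "c \<in> {-1,1}"
    have "(\<integral>x. indicator Z x * (B + c * f x) \<partial>M1) \<le> (\<integral>x. indicator Z x * (B + c * f x) \<partial>M2)"
      by (rule int_le_Hahn[OF f2 f1 s21[symmetric] _ hZ' hmeas2 pos bd]) (use c Z s21 in auto)
    then show "?thesis c" using key[OF f1 s1 Zb, of c] key[OF f2 s2 Zb, of c] by simp
  qed
  have split: "\<And>M. finite_measure M \<Longrightarrow> sets M = sets borel \<Longrightarrow>
     (\<integral>x. f x \<partial>M) = (\<integral>x. indicator Y x * f x \<partial>M) + (\<integral>x. indicator Z x * f x \<partial>M)"
  proof -
    fix M :: "'a measure" assume fM: "finite_measure M" and sM: "sets M = sets borel"
    have "(\<integral>x. f x \<partial>M) = (\<integral>x. indicator Y x * f x + indicator Z x * f x \<partial>M)"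
      by (rule Bochner_Integration.integral_cong) (auto simp: Z_def indicator_def)
    also have "\<dots> = (\<integral>x. indicator Y x * f x \<partial>M) + (\<integral>x. indicator Z x * f x \<partial>M)"
      by (rule Bochner_Integration.integral_add; rule fin_int[OF fM sM, where B=B])
         (use Yb Zb fm fB B0 in \<open>auto simp: indicator_def\<close>)
    finally show "(\<integral>x. f x \<partial>M) = (\<integral>x. indicator Y x * f x \<partial>M) + (\<integral>x. indicator Z x * f x \<partial>M)" .
  qed
  have "\<bar>sint m f\<bar> \<le> B * (smeas m Y - smeas m Z)"
    using ineqY[of 1] ineqY[of "-1"] ineqZ[of 1] ineqZ[of "-1"] split[OF f1 s1] split[OF f2 s2]
    unfolding sint_def smeas_def M1_def[symmetric] M2_def[symmetric]
    by (simp add: algebra_simps abs_le_iff)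
  also have "\<dots> \<le> B * tv m"
  proof (rule mult_left_mono[OF _ B0])
    have "bdd_above ((\<lambda>A. smeas m A - smeas m (UNIV - A)) ` sets borel)"
    proof (rule bdd_aboveI2)
      fix A :: "'a set" assume "A \<in> sets borel"
      show "smeas m A - smeas m (UNIV - A) \<le> measure M1 (space M1) + measure M2 (space M2)"
        unfolding smeas_def M1_def[symmetric] M2_def[symmetric]
        using M1.bounded_measure[of A] M2.bounded_measure[of "UNIV - A"] by (smt (verit) measure_nonneg)
    qed
    then show "smeas m Y - smeas m Z \<le> tv m"
      unfolding tv_def Z_def using Yb by (rule cSUP_upper2) auto
  qed
  finally show ?thesis .
qed



lemma inner_meas1:
  assumes "a < q"
  shows "(\<integral>r. indicator {(q,r). a < r \<and> r < q} (q, r) \<partial>lborel) = q - (a::real)"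
proof -
  have "(\<integral>r. indicator {(q,r). a < r \<and> r < q} (q, r) \<partial>lborel) = (\<integral>r. indicator {a<..<q} r \<partial>lborel)"
    by (rule Bochner_Integration.integral_cong) (auto simp: indicator_def)
  also have "\<dots> = q - a" using assms by simp
  finally show ?thesis .
qed

lemma inner_meas2:
  assumes "q \<le> b"
  shows "(\<integral>r. indicator {(q,r). q \<le> r \<and> r \<le> b} (q, r) \<partial>lborel) = b - (q::real)"
proof -
  have "(\<integral>r. indicator {(q,r). q \<le> r \<and> r \<le> b} (q, r) \<partial>lborel) = (\<integral>r. indicator {q..b} r \<partial>lborel)"
    by (rule Bochner_Integration.integral_cong) (auto simp: indicator_def)
  also have "\<dots> = b - q" using assms by simp
  finally show ?thesis .
qed

lemma tri_gen:
  fixes f :: "real \<Rightarrow> real" and S :: "(real \<times> real) set"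
  assumes fi: "set_integrable lborel {a<..b} f" and ab: "a < b"
    and S: "S \<in> sets borel"
    and sub: "\<And>q r. (q, r) \<in> S \<Longrightarrow> r \<in> {a..b}"
    and inner: "\<And>q. q \<in> {a<..b} \<Longrightarrow> (\<integral>r. indicator S (q, r) \<partial>lborel) = w q"
    and wb: "\<And>q. q \<in> {a<..b} \<Longrightarrow> 0 \<le> w q \<and> w q \<le> b - a"
    and wm: "w \<in> borel_measurable borel"
  shows "(\<integral>r. (\<integral>q. indicator {a<..b} q * f q * indicator S (q, r) \<partial>lborel) \<partial>lborel)
       = (\<integral>q. indicator {a<..b} q * f q * w q \<partial>lborel)"
proof -
  define g where "g q = indicator {a<..b} q * f q" for q
  have gi: "integrable lborel g" using fi unfolding set_integrable_def g_def by simp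
  have gm: "g \<in> borel_measurable borel" using gi by (simp add: borel_measurable_integrable)
  have Sm: "S \<in> sets (lborel \<Otimes>\<^sub>M lborel)" using S by (subst lborel_prod) simp
  have km: "(\<lambda>(q,r). g q * indicator S (q, r)) \<in> borel_measurable (lborel \<Otimes>\<^sub>M lborel)"
    using gm Sm by measurable
  have inner2: "(\<integral>r. norm (g q * indicator S (q, r)) \<partial>lborel) = \<bar>g q\<bar> * w q" for q
  proof (cases "q \<in> {a<..b}")
    case True
    have "(\<integral>r. norm (g q * indicator S (q, r)) \<partial>lborel) = (\<integral>r. \<bar>g q\<bar> * indicator S (q, r) \<partial>lborel)"
      by (rule Bochner_Integration.integral_cong) (auto simp: abs_mult)
    also have "\<dots> = \<bar>g q\<bar> * w q" using inner[OF True] by simp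
    finally show ?thesis .
  next
    case False then show ?thesis by (simp add: g_def)
  qed
  have wgi: "integrable lborel (\<lambda>q. g q * w q)"
  proof (rule Bochner_Integration.integrable_bound[OF integrable_scaleR_left[OF gi, of "b - a"]])
    show "(\<lambda>q. g q * w q) \<in> borel_measurable lborel" using gm wm by measurable
    show "AE q in lborel. norm (g q * w q) \<le> norm (g q *\<^sub>R (b - a))"
      using wb by (auto simp: g_def abs_mult indicator_def intro!: mult_left_mono)
  qed
  have sliceI: "integrable lborel (\<lambda>r. indicator S (q, r) :: real)" for q
  proof (rule Bochner_Integration.integrable_bound[OF integrable_real_indicator[of "{a..b}" lborel]])
    show "{a..b} \<in> sets lborel" by simp
    show "emeasure lborel {a..b} < \<infinity>" using ab by simp
    show "(\<lambda>r. indicator S (q, r) :: real) \<in> borel_measurable lborel" using Sm by measurable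
    show "AE r in lborel. norm (indicator S (q, r) :: real) \<le> norm (indicator {a..b} r :: real)"
      using sub by (auto simp: indicator_def)
  qed
  have prodi: "integrable (lborel \<Otimes>\<^sub>M lborel) (\<lambda>(q,r). g q * indicator S (q, r))"
  proof (rule lborel_pair.Fubini_integrable)
    show "(\<lambda>(q,r). g q * indicator S (q, r)) \<in> borel_measurable (lborel \<Otimes>\<^sub>M lborel)" by (rule km)
    show "integrable lborel (\<lambda>q. \<integral>r. norm (case (q, r) of (q, r) \<Rightarrow> g q * indicator S (q, r)) \<partial>lborel)"
      unfolding case_prod_conv inner2 using integrable_abs[OF wgi]
      by (rule Bochner_Integration.integrable_cong[THEN iffD1, rotated -1]) (use wb in \<open>auto simp: g_def abs_mult indicator_def\<close>)
    show "AE q in lborel. integrable lborel (\<lambda>r. case (q, r) of (q, r) \<Rightarrow> g q * indicator S (q, r))"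
      using sliceI by auto
  qed
  have "(\<integral>r. (\<integral>q. g q * indicator S (q, r) \<partial>lborel) \<partial>lborel) = (\<integral>q. (\<integral>r. g q * indicator S (q, r) \<partial>lborel) \<partial>lborel)"
    using lborel_pair.Fubini_integral[of "\<lambda>q r. g q * indicator S (q, r)"] prodi by simp
  also have "\<dots> = (\<integral>q. g q * w q \<partial>lborel)"
  proof (rule Bochner_Integration.integral_cong[OF refl])
    fix q
    show "(\<integral>r. g q * indicator S (q, r) \<partial>lborel) = g q * w q"
      using inner[of q] by (cases "q \<in> {a<..b}") (auto simp: g_def)
  qed
  finally show ?thesis unfolding g_def .
qed

lemma tri1:
  fixes f :: "real \<Rightarrow> real"
  assumes fi: "set_integrable lborel {a<..b} f" and ab: "a < b"
  shows "(\<integral>r\<in>{a<..b}. (\<integral>q\<in>{r<..b}. f q \<partial>lborel) \<partial>lborel) = (\<integral>q\<in>{a<..b}. (q - a) * f q \<partial>lborel)"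
proof -
  define S where "S = {(q,r). a < r \<and> r < q \<and> q \<le> (b::real)}"
  have "(\<integral>r. (\<integral>q. indicator {a<..b} q * f q * indicator S (q, r) \<partial>lborel) \<partial>lborel)
       = (\<integral>q. indicator {a<..b} q * f q * (q - a) \<partial>lborel)"
  proof (rule tri_gen[OF fi ab])
    have "S = {p. a < snd p} \<inter> {p. snd p < fst p} \<inter> {p. fst p \<le> b}" by (auto simp: S_def)
    moreover have "{p::real\<times>real. a < snd p} \<in> sets borel" by (rule borel_open, rule open_Collect_less) (intro continuous_intros)+
    moreover have "{p::real\<times>real. snd p < fst p} \<in> sets borel" by (rule borel_open, rule open_Collect_less) (intro continuous_intros)+
    moreover have "{p::real\<times>real. fst p \<le> b} \<in> sets borel" by (rule borel_closed, rule closed_Collect_le) (intro continuous_intros)+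
    ultimately show "S \<in> sets borel" by auto
    show "\<And>q r. (q, r) \<in> S \<Longrightarrow> r \<in> {a..b}" by (auto simp: S_def)
    show "\<And>q. q \<in> {a<..b} \<Longrightarrow> (\<integral>r. indicator S (q, r) \<partial>lborel) = q - a"
    proof -
      fix q assume q: "q \<in> {a<..b}"
      have "(\<integral>r. indicator S (q, r) \<partial>lborel) = (\<integral>r. indicator {a<..<q} r \<partial>lborel)"
        using q by (intro Bochner_Integration.integral_cong) (auto simp: indicator_def S_def)
      also have "\<dots> = q - a" using q by simp
      finally show "(\<integral>r. indicator S (q, r) \<partial>lborel) = q - a" .
    qed
    show "\<And>q. q \<in> {a<..b} \<Longrightarrow> 0 \<le> q - a \<and> q - a \<le> b - a" by auto
    show "(\<lambda>q. q - a) \<in> borel_measurable borel" by measurable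
  qed
  moreover have "(\<integral>r. (\<integral>q. indicator {a<..b} q * f q * indicator S (q, r) \<partial>lborel) \<partial>lborel)
     = (\<integral>r\<in>{a<..b}. (\<integral>q\<in>{r<..b}. f q \<partial>lborel) \<partial>lborel)"
    unfolding set_lebesgue_integral_def
  proof (rule Bochner_Integration.integral_cong[OF refl])
    fix r
    show "(\<integral>q. indicator {a<..b} q * f q * indicator S (q, r) \<partial>lborel) = indicator {a<..b} r *\<^sub>R (\<integral>q. indicator {r<..b} q *\<^sub>R f q \<partial>lborel)"
    proof (cases "r \<in> {a<..b}")
      case True
      then show ?thesis by (auto intro!: Bochner_Integration.integral_cong simp: indicator_def S_def)
    next
      case False
      then have z: "(\<lambda>q. indicator {a<..b} q * f q * indicator S (q, r)) = (\<lambda>q. 0::real)"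
        by (auto simp: indicator_def S_def fun_eq_iff)
      show ?thesis using False by (simp add: z)
    qed
  qed
  ultimately show ?thesis unfolding set_lebesgue_integral_def by (simp add: mult_ac)
qed

lemma tri2:
  fixes f :: "real \<Rightarrow> real"
  assumes fi: "set_integrable lborel {a<..b} f" and ab: "a < b"
  shows "(\<integral>r\<in>{a<..b}. (\<integral>q\<in>{a<..r}. f q \<partial>lborel) \<partial>lborel) = (\<integral>q\<in>{a<..b}. (b - q) * f q \<partial>lborel)"
proof -
  define S where "S = {(q,r). q \<le> r \<and> r \<le> b \<and> a < (q::real)}"
  have "(\<integral>r. (\<integral>q. indicator {a<..b} q * f q * indicator S (q, r) \<partial>lborel) \<partial>lborel)
       = (\<integral>q. indicator {a<..b} q * f q * (b - q) \<partial>lborel)"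
  proof (rule tri_gen[OF fi ab])
    have "S = {p. fst p \<le> snd p} \<inter> {p. snd p \<le> b} \<inter> {p. a < fst p}" by (auto simp: S_def)
    moreover have "{p::real\<times>real. fst p \<le> snd p} \<in> sets borel" by (rule borel_closed, rule closed_Collect_le) (intro continuous_intros)+
    moreover have "{p::real\<times>real. snd p \<le> b} \<in> sets borel" by (rule borel_closed, rule closed_Collect_le) (intro continuous_intros)+
    moreover have "{p::real\<times>real. a < fst p} \<in> sets borel" by (rule borel_open, rule open_Collect_less) (intro continuous_intros)+
    ultimately show "S \<in> sets borel" by auto
    show "\<And>q r. (q, r) \<in> S \<Longrightarrow> r \<in> {a..b}" by (auto simp: S_def)
    show "\<And>q. q \<in> {a<..b} \<Longrightarrow> (\<integral>r. indicator S (q, r) \<partial>lborel) = b - q"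
    proof -
      fix q assume q: "q \<in> {a<..b}"
      have "(\<integral>r. indicator S (q, r) \<partial>lborel) = (\<integral>r. indicator {q..b} r \<partial>lborel)"
        using q by (intro Bochner_Integration.integral_cong) (auto simp: indicator_def S_def)
      also have "\<dots> = b - q" using q by simp
      finally show "(\<integral>r. indicator S (q, r) \<partial>lborel) = b - q" .
    qed
    show "\<And>q. q \<in> {a<..b} \<Longrightarrow> 0 \<le> b - q \<and> b - q \<le> b - a" by auto
    show "(\<lambda>q. b - q) \<in> borel_measurable borel" by measurable
  qed
  moreover have "(\<integral>r. (\<integral>q. indicator {a<..b} q * f q * indicator S (q, r) \<partial>lborel) \<partial>lborel)
     = (\<integral>r\<in>{a<..b}. (\<integral>q\<in>{a<..r}. f q \<partial>lborel) \<partial>lborel)"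
    unfolding set_lebesgue_integral_def
  proof (rule Bochner_Integration.integral_cong[OF refl])
    fix r
    show "(\<integral>q. indicator {a<..b} q * f q * indicator S (q, r) \<partial>lborel) = indicator {a<..b} r *\<^sub>R (\<integral>q. indicator {a<..r} q *\<^sub>R f q \<partial>lborel)"
    proof (cases "r \<in> {a<..b}")
      case True
      then show ?thesis by (auto intro!: Bochner_Integration.integral_cong simp: indicator_def S_def)
    next
      case False
      then have z: "(\<lambda>q. indicator {a<..b} q * f q * indicator S (q, r)) = (\<lambda>q. 0::real)"
        by (auto simp: indicator_def S_def fun_eq_iff)
      show ?thesis using False by (simp add: z)
    qed
  qed
  ultimately show ?thesis unfolding set_lebesgue_integral_def by (simp add: mult_ac)
qed



lemma sum_indicator_le1:
  fixes l r :: "nat \<Rightarrow> real"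
  assumes disj: "\<forall>i<n. \<forall>j<n. i \<noteq> j \<longrightarrow> r i \<le> l j \<or> r j \<le> l i"
  shows "(\<Sum>i<n. indicator {l i<..r i} x) \<le> (1::real)"
proof (cases "\<exists>i0<n. x \<in> {l i0<..r i0}")
  case True
  then obtain i0 where i0: "i0 < n" "x \<in> {l i0<..r i0}" by blast
  have "\<And>i. i < n \<Longrightarrow> indicator {l i<..r i} x = (if i = i0 then 1 else (0::real))"
  proof -
    fix i assume i: "i < n"
    show "indicator {l i<..r i} x = (if i = i0 then 1 else (0::real))"
    proof (cases "i = i0")
      case True then show ?thesis using i0 by simp
    next
      case False
      then have "r i \<le> l i0 \<or> r i0 \<le> l i" using disj i i0(1) by blast
      then have "x \<notin> {l i<..r i}" using i0(2) by auto
      then show ?thesis using False by simp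
    qed
  qed
  then have "(\<Sum>i<n. indicator {l i<..r i} x) = (\<Sum>i<n. if i = i0 then 1 else (0::real))"
    by (intro sum.cong) auto
  also have "\<dots> = 1" using i0(1) by simp
  finally show ?thesis by simp
next
  case False
  then have "(\<Sum>i<n. indicator {l i<..r i} x) = (0::real)" by (intro sum.neutral) auto
  then show ?thesis by simp
qed

lemma abs_cont_from_integral:
  fixes F g :: "real \<Rightarrow> real"
  assumes gi: "set_integrable lborel {a..b} g"
    and F: "\<And>x. x \<in> {a..b} \<Longrightarrow> F x = F a + (\<integral>s\<in>{a..x}. g s \<partial>lborel)"
  shows "abs_cont_on a b F"
  unfolding abs_cont_on_def
proof (intro allI impI)
  fix \<epsilon> :: real assume e: "\<epsilon> > 0"
  define G where "G x = indicator {a..b} x * \<bar>g x\<bar>" for x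
  have Gi: "integrable lborel G" using integrable_abs[OF gi[unfolded set_integrable_def]]
    by (rule Bochner_Integration.integrable_cong[THEN iffD1, rotated -1]) (auto simp: G_def indicator_def)
  have Gm: "G \<in> borel_measurable lborel" using Gi by (rule borel_measurable_integrable)
  have G0: "\<And>x. 0 \<le> G x" by (simp add: G_def)
  have lim: "(\<lambda>N. \<integral>x. min (G x) (real N) \<partial>lborel) \<longlonglongrightarrow> (\<integral>x. G x \<partial>lborel)"
  proof (rule integral_dominated_convergence[where w=G])
    show "G \<in> borel_measurable lborel" by fact
    show "\<And>N. (\<lambda>x. min (G x) (real N)) \<in> borel_measurable lborel" using Gm by measurable
    show "integrable lborel G" by fact
    show "AE x in lborel. (\<lambda>N. min (G x) (real N)) \<longlonglongrightarrow> G x"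
    proof (rule AE_I2)
      fix x
      obtain N0 :: nat where "G x \<le> real N0" using real_arch_simple by blast
      then have "\<forall>N\<ge>N0. min (G x) (real N) = G x" by (auto intro: order_trans)
      then show "(\<lambda>N. min (G x) (real N)) \<longlonglongrightarrow> G x"
        by (intro tendsto_eventually) (auto simp: eventually_sequentially)
    qed
    show "\<And>N. AE x in lborel. norm (min (G x) (real N)) \<le> G x" using G0 by auto
  qed
  then obtain N :: nat where N: "dist (\<integral>x. min (G x) (real N) \<partial>lborel) (\<integral>x. G x \<partial>lborel) < \<epsilon>/2"
  proof -
    obtain no where "\<forall>n\<ge>no. dist (\<integral>x. min (G x) (real n) \<partial>lborel) (\<integral>x. G x \<partial>lborel) < \<epsilon>/2"
      using e lim unfolding LIMSEQ_def by (metis half_gt_zero)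
    then show ?thesis using that by blast
  qed
  define \<delta> where "\<delta> = \<epsilon> / (2 * (real N + 1))"
  have d0: "\<delta> > 0" using e by (simp add: \<delta>_def)
  have minI: "integrable lborel (\<lambda>x. min (G x) (real N))"
    using Gi by (rule Bochner_Integration.integrable_bound) (use Gm G0 in auto)
  have restI: "integrable lborel (\<lambda>x. G x - min (G x) (real N))" using Gi minI by auto
  have rest: "(\<integral>x. G x - min (G x) (real N) \<partial>lborel) < \<epsilon>/2"
    using N Gi minI by (simp add: dist_real_def) (smt (verit))
  show "\<exists>\<delta>>0. \<forall>(n::nat) (l::nat \<Rightarrow> real) r.
        (\<forall>i<n. a \<le> l i \<and> l i \<le> r i \<and> r i \<le> b)
        \<and> (\<forall>i<n. \<forall>j<n. i \<noteq> j \<longrightarrow> r i \<le> l j \<or> r j \<le> l i)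
        \<and> (\<Sum>i<n. r i - l i) < \<delta>
        \<longrightarrow> (\<Sum>i<n. \<bar>F (r i) - F (l i)\<bar>) < \<epsilon>"
  proof (intro exI[of _ \<delta>] conjI d0 allI impI)
    fix n :: nat and l r :: "nat \<Rightarrow> real"
    assume H: "(\<forall>i<n. a \<le> l i \<and> l i \<le> r i \<and> r i \<le> b)
        \<and> (\<forall>i<n. \<forall>j<n. i \<noteq> j \<longrightarrow> r i \<le> l j \<or> r j \<le> l i)
        \<and> (\<Sum>i<n. r i - l i) < \<delta>"
    then have lr: "\<And>i. i < n \<Longrightarrow> a \<le> l i \<and> l i \<le> r i \<and> r i \<le> b"
      and disj: "\<forall>i<n. \<forall>j<n. i \<noteq> j \<longrightarrow> r i \<le> l j \<or> r j \<le> l i"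
      and sl: "(\<Sum>i<n. r i - l i) < \<delta>" by auto
    have piece: "\<bar>F (r i) - F (l i)\<bar> \<le> (\<integral>x. indicator {l i<..r i} x * G x \<partial>lborel)" if i: "i < n" for i
    proof -
      have l: "a \<le> l i" "l i \<le> r i" "r i \<le> b" using lr[OF i] by auto
      have un: "{a..r i} = {a..l i} \<union> {l i<..r i}" using l by auto
      have si1: "set_integrable lborel {a..l i} g" using gi by (rule set_integrable_subset) (use l in auto)
      have si2: "set_integrable lborel {l i<..r i} g" using gi by (rule set_integrable_subset) (use l in auto)
      have "F (r i) - F (l i) = (\<integral>s\<in>{l i<..r i}. g s \<partial>lborel)"
      proof -
        have "{a..l i} \<inter> {l i<..r i} = {}" by auto
        then show ?thesis using F[of "r i"] F[of "l i"] l set_integral_Un[OF _ si1 si2] un by auto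
      qed
      also have "\<bar>\<dots>\<bar> \<le> (\<integral>x. indicator {l i<..r i} x * G x \<partial>lborel)"
        unfolding set_lebesgue_integral_def
      proof (rule integral_abs_bound_integral)
        show "integrable lborel (\<lambda>x. indicator {l i<..r i} x *\<^sub>R g x)" using si2 by (simp add: set_integrable_def)
        show "integrable lborel (\<lambda>x. indicator {l i<..r i} x * G x)"
          using Gi by (rule Bochner_Integration.integrable_bound) (use Gm G0 in \<open>auto simp: indicator_def\<close>)
        show "\<And>x. x \<in> space lborel \<Longrightarrow> \<bar>indicator {l i<..r i} x *\<^sub>R g x\<bar> \<le> indicator {l i<..r i} x * G x"
          using l by (auto simp: indicator_def G_def)
      qed
      finally show ?thesis .
    qed
    have indI: "\<And>i. integrable lborel (\<lambda>x. indicator {l i<..r i} x * (G x - min (G x) (real N)))"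
      using restI by (rule Bochner_Integration.integrable_bound) (use Gm G0 in \<open>auto simp: indicator_def\<close>)
    have indI2: "\<And>i. integrable lborel (\<lambda>x. indicator {l i<..r i} x * min (G x) (real N))"
      using minI by (rule Bochner_Integration.integrable_bound) (use Gm G0 in \<open>auto simp: indicator_def\<close>)
    have "(\<Sum>i<n. \<bar>F (r i) - F (l i)\<bar>) \<le> (\<Sum>i<n. \<integral>x. indicator {l i<..r i} x * G x \<partial>lborel)"
      by (rule sum_mono) (rule piece, simp)
    also have "\<dots> = (\<Sum>i<n. (\<integral>x. indicator {l i<..r i} x * (G x - min (G x) (real N)) \<partial>lborel)
                         + (\<integral>x. indicator {l i<..r i} x * min (G x) (real N) \<partial>lborel))"
    proof (rule sum.cong[OF refl])
      fix i
      have "(\<integral>x. indicator {l i<..r i} x * G x \<partial>lborel) = (\<integral>x. indicator {l i<..r i} x * (G x - min (G x) (real N)) + indicator {l i<..r i} x * min (G x) (real N) \<partial>lborel)"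
        by (simp add: algebra_simps)
      also have "\<dots> = (\<integral>x. indicator {l i<..r i} x * (G x - min (G x) (real N)) \<partial>lborel)
                         + (\<integral>x. indicator {l i<..r i} x * min (G x) (real N) \<partial>lborel)"
        using indI indI2 by (rule Bochner_Integration.integral_add)
      finally show "(\<integral>x. indicator {l i<..r i} x * G x \<partial>lborel) = (\<integral>x. indicator {l i<..r i} x * (G x - min (G x) (real N)) \<partial>lborel)
                         + (\<integral>x. indicator {l i<..r i} x * min (G x) (real N) \<partial>lborel)" .
    qed
    also have "\<dots> = (\<integral>x. (\<Sum>i<n. indicator {l i<..r i} x) * (G x - min (G x) (real N)) \<partial>lborel)
                   + (\<Sum>i<n. \<integral>x. indicator {l i<..r i} x * min (G x) (real N) \<partial>lborel)"
      using indI by (simp add: sum.distrib Bochner_Integration.integral_sum[symmetric] sum_distrib_right)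
    also have "\<dots> \<le> (\<integral>x. G x - min (G x) (real N) \<partial>lborel) + (\<Sum>i<n. real N * (r i - l i))"
    proof (rule add_mono)
      show "(\<integral>x. (\<Sum>i<n. indicator {l i<..r i} x) * (G x - min (G x) (real N)) \<partial>lborel) \<le> (\<integral>x. G x - min (G x) (real N) \<partial>lborel)"
      proof (rule integral_mono)
        show "integrable lborel (\<lambda>x. (\<Sum>i<n. indicator {l i<..r i} x) * (G x - min (G x) (real N)))"
        proof -
          have "integrable lborel (\<lambda>x. \<Sum>i<n. indicator {l i<..r i} x * (G x - min (G x) (real N)))"
            using indI by (intro Bochner_Integration.integrable_sum) auto
          then show ?thesis by (simp only: sum_distrib_right)
        qed
        show "integrable lborel (\<lambda>x. G x - min (G x) (real N))" by fact
        fix x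
        have "(\<Sum>i<n. indicator {l i<..r i} x) \<le> (1::real)" by (rule sum_indicator_le1[OF disj])
        moreover have "0 \<le> G x - min (G x) (real N)" by simp
        ultimately show "(\<Sum>i<n. indicator {l i<..r i} x) * (G x - min (G x) (real N)) \<le> G x - min (G x) (real N)"
          by (simp add: mult_left_le_one_le sum_nonneg)
      qed
      show "(\<Sum>i<n. \<integral>x. indicator {l i<..r i} x * min (G x) (real N) \<partial>lborel) \<le> (\<Sum>i<n. real N * (r i - l i))"
      proof (rule sum_mono)
        fix i assume "i \<in> {..<n}"
        then have li: "l i \<le> r i" using lr by auto
        have "(\<integral>x. indicator {l i<..r i} x * min (G x) (real N) \<partial>lborel) \<le> (\<integral>x. real N * indicator {l i<..r i} x \<partial>lborel)"
        proof (rule integral_mono[OF indI2])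
          have "integrable lborel (indicator {l i<..r i} :: real \<Rightarrow> real)" using li by (intro integrable_real_indicator) auto
          then show "integrable lborel (\<lambda>x. real N * indicator {l i<..r i} x)" by simp
        qed (use li in \<open>auto simp: indicator_def\<close>)
        also have "\<dots> = real N * (r i - l i)" using li by simp
        finally show "(\<integral>x. indicator {l i<..r i} x * min (G x) (real N) \<partial>lborel) \<le> real N * (r i - l i)" .
      qed
    qed
    also have "\<dots> < \<epsilon>/2 + \<epsilon>/2"
    proof (rule add_less_le_mono[OF rest])
      have "(\<Sum>i<n. real N * (r i - l i)) = real N * (\<Sum>i<n. r i - l i)" by (simp add: sum_distrib_left)
      also have "\<dots> \<le> real N * \<delta>" using sl by (intro mult_left_mono) auto
      also have "\<dots> \<le> \<epsilon>/2" using e unfolding \<delta>_def by (simp add: field_simps)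
      finally show "(\<Sum>i<n. real N * (r i - l i)) \<le> \<epsilon>/2" .
    qed
    finally show "(\<Sum>i<n. \<bar>F (r i) - F (l i)\<bar>) < \<epsilon>" by simp
  qed
qed



lemma meas_borel_cong:
  fixes f :: "'a::topological_space \<Rightarrow> real"
  assumes "sets M = sets borel" "f \<in> borel_measurable borel"
  shows "f \<in> borel_measurable M"
proof -
  have e: "(borel_measurable M :: ('a \<Rightarrow> real) set) = borel_measurable borel" using measurable_cong_sets[OF assms(1) refl] .
  show ?thesis using assms(2) e by simp
qed

lemma fin_smeasureD:
  assumes "fin_smeasure m"
  shows "finite_measure (fst m)" "finite_measure (snd m)" "sets (fst m) = sets borel" "sets (snd m) = sets borel"
  using assms unfolding fin_smeasure_def by auto

definition bdd_meas :: "('a::topological_space \<Rightarrow> real) \<Rightarrow> bool" where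
  "bdd_meas f \<longleftrightarrow> f \<in> borel_measurable borel \<and> (\<exists>B. \<forall>x. \<bar>f x\<bar> \<le> B)"

lemma bdd_meas_int:
  assumes "fin_smeasure m" "bdd_meas f"
  shows "integrable (fst m) f" "integrable (snd m) f"
proof -
  obtain B where B: "\<And>x. \<bar>f x\<bar> \<le> B" and fm: "f \<in> borel_measurable borel" using assms(2) unfolding bdd_meas_def by blast
  show "integrable (fst m) f" using fin_int[OF fin_smeasureD(1,3)[OF assms(1)] fm B] .
  show "integrable (snd m) f" using fin_int[OF fin_smeasureD(2,4)[OF assms(1)] fm B] .
qed

lemma sint_add:
  assumes "fin_smeasure m" "bdd_meas f" "bdd_meas g"
  shows "sint m (\<lambda>x. f x + g x) = sint m f + sint m g"
  using bdd_meas_int[OF assms(1,2)] bdd_meas_int[OF assms(1,3)] unfolding sint_def by simp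

lemma sint_diff:
  assumes "fin_smeasure m" "bdd_meas f" "bdd_meas g"
  shows "sint m (\<lambda>x. f x - g x) = sint m f - sint m g"
  using bdd_meas_int[OF assms(1,2)] bdd_meas_int[OF assms(1,3)] unfolding sint_def by simp

lemma sint_cmult: "sint m (\<lambda>x. c * f x) = c * sint m f"
  unfolding sint_def by (simp add: algebra_simps)

lemma sint_divide: "sint m (\<lambda>x. f x / c) = sint m f / c"
  unfolding sint_def by (simp add: diff_divide_distrib)

lemma tv_nonneg:
  assumes "fin_smeasure m" shows "0 \<le> tv (m :: 'a::topological_space smeasure)"
  using sint_bound[OF assms, of "\<lambda>x. 0" 1] by simp

lemma sint_tendsto:
  fixes m :: "'a::topological_space smeasure"
  assumes m: "fin_smeasure m" and Fm: "\<And>n. F n \<in> borel_measurable borel"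
    and FB: "\<And>n x. \<bar>F n x\<bar> \<le> B" and lim: "\<And>x. (\<lambda>n. F n x) \<longlonglongrightarrow> f x"
  shows "(\<lambda>n. sint m (F n)) \<longlonglongrightarrow> sint m f"
proof -
  have fm: "f \<in> borel_measurable borel" using lim Fm by (rule borel_measurable_LIMSEQ_real)
  have D: "(\<lambda>n. \<integral>x. F n x \<partial>M) \<longlonglongrightarrow> (\<integral>x. f x \<partial>M)" if fM: "finite_measure M" and sM: "sets M = sets borel" for M
  proof (rule integral_dominated_convergence[where w="\<lambda>x. B"])
    have e: "(borel_measurable M :: ('a \<Rightarrow> real) set) = borel_measurable borel" using measurable_cong_sets[OF sM refl] .
    show "f \<in> borel_measurable M" using fm e by simp
    show "\<And>n. F n \<in> borel_measurable M" using Fm e by simp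
    show "integrable M (\<lambda>x. B)" using fM by (simp add: finite_measure.integrable_const)
    show "AE x in M. (\<lambda>n. F n x) \<longlonglongrightarrow> f x" using lim by simp
    show "\<And>n. AE x in M. norm (F n x) \<le> B" using FB by simp
  qed
  have 1: "finite_measure (fst m)" "sets (fst m) = sets borel" using m unfolding fin_smeasure_def by auto
  have 2: "finite_measure (snd m)" "sets (snd m) = sets borel" using m unfolding fin_smeasure_def by auto
  note a = D[OF 1]
  note b = D[OF 2]
  from tendsto_diff[OF a b]
  show ?thesis by (simp only: sint_def)
qed



lemma MV_U:
  fixes U Ut :: "real \<Rightarrow> 'a \<Rightarrow> real"
  assumes deriv: "\<forall>x. \<forall>t\<in>{0..T}. ((\<lambda>s. U s x) has_real_derivative Ut t x) (at t within {0..T})"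
    and ab: "0 \<le> a" "a < b" "b \<le> T"
  shows "\<exists>\<xi>\<in>{a<..<b}. U b x - U a x = Ut \<xi> x * (b - a)"
proof -
  have "\<exists>\<xi>\<in>{a<..<b}. (\<lambda>s. U s x) b - (\<lambda>s. U s x) a = (\<lambda>h. Ut \<xi> x * h) (b - a)"
  proof (rule mvt_simple[OF ab(2)])
    fix s assume s: "a \<le> s" "s \<le> b"
    have "((\<lambda>s. U s x) has_real_derivative Ut s x) (at s within {0..T})" using deriv s ab by auto
    then have "((\<lambda>s. U s x) has_real_derivative Ut s x) (at s within {a..b})"
      by (rule DERIV_subset) (use ab in auto)
    then show "((\<lambda>s. U s x) has_derivative (\<lambda>h. Ut s x * h)) (at s within {a..b})"
      by (simp add: has_field_derivative_def)
  qed
  then show ?thesis by simp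
qed

lemma index_exists:
  fixes t q :: real and N :: nat
  assumes t: "0 < t" and N: "0 < N" and q: "0 < q" "q \<le> t"
  shows "\<exists>k<N. real k * (t / N) < q \<and> q \<le> real (Suc k) * (t / N)"
proof -
  define h where "h = t / N"
  have h: "0 < h" using t N by (simp add: h_def)
  define c where "c = \<lceil>q / h\<rceil>"
  have c1: "q / h \<le> c" unfolding c_def by simp
  have c2: "c < q / h + 1" unfolding c_def by linarith
  have qh: "0 < q / h" using q h by simp
  then have cpos: "1 \<le> c" using c1 by (simp add: c_def)
  have "q / h \<le> N" using q h t N by (simp add: h_def field_simps)
  then have cN: "c \<le> int N" unfolding c_def by (simp add: ceiling_le_iff)
  define k where "k = nat (c - 1)"
  have kc: "real k = real_of_int c - 1" using cpos by (simp add: k_def)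
  have "k < N" using cN cpos by (simp add: k_def)
  moreover have "real k * h < q"
  proof -
    have "real k < q / h" using kc c2 by linarith
    then show ?thesis using h by (simp add: field_simps)
  qed
  moreover have "q \<le> real (Suc k) * h"
  proof -
    have "q / h \<le> real (Suc k)" using kc c1 by simp
    then show ?thesis using h by (simp add: field_simps)
  qed
  ultimately show ?thesis unfolding h_def by blast
qed

lemma sum_single:
  fixes f :: "nat \<Rightarrow> real"
  assumes "k < N" "\<And>i. i < N \<Longrightarrow> i \<noteq> k \<Longrightarrow> f i = 0"
  shows "(\<Sum>i<N. f i) = f k"
proof -
  have "(\<Sum>i<N. f i) = f k + (\<Sum>i\<in>{..<N} - {k}. f i)"
    using assms(1) by (subst sum.remove[of _ k]) auto
  also have "(\<Sum>i\<in>{..<N} - {k}. f i) = 0" using assms(2) by (intro sum.neutral) auto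
  finally show ?thesis by simp
qed

lemma abs_cont_continuous:
  assumes "abs_cont_on a b f"
  shows "continuous_on {a..b} f"
  unfolding continuous_on_iff
proof (intro ballI allI impI)
  fix x e assume x: "x \<in> {a..b}" and e: "(0::real) < e"
  obtain d where d: "d > 0" and H: "\<forall>(n::nat) (l::nat \<Rightarrow> real) r.
        (\<forall>i<n. a \<le> l i \<and> l i \<le> r i \<and> r i \<le> b)
        \<and> (\<forall>i<n. \<forall>j<n. i \<noteq> j \<longrightarrow> r i \<le> l j \<or> r j \<le> l i)
        \<and> (\<Sum>i<n. r i - l i) < d
        \<longrightarrow> (\<Sum>i<n. \<bar>f (r i) - f (l i)\<bar>) < e"
    using assms e unfolding abs_cont_on_def by blast
  show "\<exists>d>0. \<forall>x'\<in>{a..b}. dist x' x < d \<longrightarrow> dist (f x') (f x) < e"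
  proof (intro exI[of _ d] conjI d ballI impI)
    fix y assume y: "y \<in> {a..b}" and dy: "dist y x < d"
    show "dist (f y) (f x) < e"
    proof (cases "x \<le> y")
      case True
      have "\<bar>f y - f x\<bar> < e"
        using H[rule_format, of 1 "\<lambda>_. x" "\<lambda>_. y"] x y True dy by (auto simp: dist_real_def card_lessThan)
      then show ?thesis by (simp add: dist_real_def)
    next
      case False
      have "\<bar>f x - f y\<bar> < e"
        using H[rule_format, of 1 "\<lambda>_. y" "\<lambda>_. x"] x y False dy by (auto simp: dist_real_def card_lessThan)
      then show ?thesis by (simp add: dist_real_def abs_minus_commute)
    qed
  qed
qed



lemma set_integrable_bdd_factor:
  fixes f w :: "real \<Rightarrow> real"
  assumes fi: "set_integrable lborel A f" and wm: "w \<in> borel_measurable borel" and wb: "\<And>x. x \<in> A \<Longrightarrow> \<bar>w x\<bar> \<le> C"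
  shows "set_integrable lborel A (\<lambda>x. w x * f x)"
proof (rule set_integrable_bound[where f="\<lambda>x. C * f x"])
  show "set_integrable lborel A (\<lambda>x. C * f x)" using fi by simp
  have "(\<lambda>x. indicator A x *\<^sub>R f x) \<in> borel_measurable lborel"
    using fi unfolding set_integrable_def by (rule borel_measurable_integrable)
  then have "(\<lambda>x. w x * (indicator A x *\<^sub>R f x)) \<in> borel_measurable lborel" using wm by measurable
  then show "set_borel_measurable lborel A (\<lambda>x. w x * f x)"
    unfolding set_borel_measurable_def by (simp add: mult_ac)
  show "AE x in lborel. x \<in> A \<longrightarrow> norm (w x * f x) \<le> norm (C * f x)"
  proof (rule AE_I2, rule impI)
    fix x assume x: "x \<in> A"
    have "\<bar>w x\<bar> * \<bar>f x\<bar> \<le> \<bar>C\<bar> * \<bar>f x\<bar>" using wb[OF x] by (intro mult_right_mono) auto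
    then show "norm (w x * f x) \<le> norm (C * f x)" by (simp add: abs_mult)
  qed
qed

lemma set_integrable_const_Ioc: "set_integrable lborel {a<..b::real} (\<lambda>_. k::real)"
proof -
  have "integrable lborel (\<lambda>x. indicator {a<..b} x * k)"
  proof -
    have "bounded {a<..b}" by (rule bounded_subset[OF compact_imp_bounded[OF compact_Icc[of a b]]]) auto
    then have "emeasure lborel {a<..b} < \<infinity>" by (rule emeasure_bounded_finite)
    then show ?thesis by (intro integrable_mult_left integrable_real_indicator) auto
  qed
  then show ?thesis unfolding set_integrable_def by simp
qed

lemma core:
  fixes \<mu>t :: "real \<Rightarrow> 'a::topological_space smeasure" and U Ut KU :: "real \<Rightarrow> 'a \<Rightarrow> real" and c :: "real \<Rightarrow> real"
  assumes fin: "\<And>r. 0 \<le> r \<Longrightarrow> fin_smeasure (\<mu>t r)"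
    and tvi: "set_integrable lborel {0..T} (\<lambda>r. tv (\<mu>t r))"
    and Hi: "\<And>s. s \<in> {0..T} \<Longrightarrow> set_integrable lborel {0..T} (\<lambda>q. sint (\<mu>t q) (KU s))"
    and eqn: "\<And>s r. s \<in> {0..T} \<Longrightarrow> r \<in> {0..T} \<Longrightarrow> sint (\<mu>t r) (U s) = c s + (\<integral>q\<in>{0..r}. sint (\<mu>t q) (KU s) \<partial>lborel)"
    and Gc: "\<And>s. s \<in> {0..T} \<Longrightarrow> continuous_on {0..T} (\<lambda>r. sint (\<mu>t r) (U s))"
    and Uc: "\<And>s. s \<in> {0..T} \<Longrightarrow> continuous_on UNIV (U s)"
    and UB: "\<And>s x. s \<in> {0..T} \<Longrightarrow> \<bar>U s x\<bar> \<le> CUU"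
    and Utc: "continuous_on ({0..T} \<times> UNIV) (\<lambda>(s,x). Ut s x)"
    and UtB: "\<And>s x. s \<in> {0..T} \<Longrightarrow> \<bar>Ut s x\<bar> \<le> CU"
    and KUc: "continuous_on ({0..T} \<times> UNIV) (\<lambda>(s,x). KU s x)"
    and KUB: "\<And>s x. s \<in> {0..T} \<Longrightarrow> \<bar>KU s x\<bar> \<le> CK"
    and deriv: "\<forall>x. \<forall>t\<in>{0..T}. ((\<lambda>s. U s x) has_real_derivative Ut t x) (at t within {0..T})"
    and t: "0 < t" "t \<le> T"
  shows "set_integrable lborel {0..t} (\<lambda>s. sint (\<mu>t s) (\<lambda>x. Ut s x + KU s x))
     \<and> sint (\<mu>t t) (U t) - sint (\<mu>t 0) (U 0) = (\<integral>s\<in>{0..t}. sint (\<mu>t s) (\<lambda>x. Ut s x + KU s x) \<partial>lborel)"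
proof -
  define H where "H s q = sint (\<mu>t q) (KU s)" for s q
  define G where "G s r = sint (\<mu>t r) (U s)" for s r
  define W where "W q = tv (\<mu>t q)" for q
  define g where "g q = sint (\<mu>t q) (\<lambda>x. Ut q x + KU q x)" for q
  define \<phi> where "\<phi> a b q = (q - a) / (b - a) * H b q + (b - q) / (b - a) * H a q + (G b q - G a q) / (b - a)" for a b q
  have T0: "0 < T" using t by simp
  have CK0: "0 \<le> CK" using KUB[of 0 undefined] T0 by simp
  have CU0: "0 \<le> CU" using UtB[of 0 undefined] T0 by simp
  have contK: "continuous_on UNIV (KU s)" if s: "s \<in> {0..T}" for s
    by (rule continuous_on_compose2[OF KUc, of UNIV "\<lambda>x. (s, x)", simplified])
       (use s in \<open>auto intro!: continuous_intros\<close>)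
  have contUt: "continuous_on UNIV (Ut s)" if s: "s \<in> {0..T}" for s
    by (rule continuous_on_compose2[OF Utc, of UNIV "\<lambda>x. (s, x)", simplified])
       (use s in \<open>auto intro!: continuous_intros\<close>)
  have bmK: "bdd_meas (KU s)" if s: "s \<in> {0..T}" for s
    unfolding bdd_meas_def using borel_measurable_continuous_onI[OF contK[OF s]] KUB[OF s] by blast
  have bmUt: "bdd_meas (Ut s)" if s: "s \<in> {0..T}" for s
    unfolding bdd_meas_def using borel_measurable_continuous_onI[OF contUt[OF s]] UtB[OF s] by blast
  have mU: "U s \<in> borel_measurable borel" if s: "s \<in> {0..T}" for s
    using borel_measurable_continuous_onI[OF Uc[OF s]] .
  have W0: "0 \<le> W r" if "0 \<le> r" for r unfolding W_def using tv_nonneg[OF fin[OF that]] .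
  have Hb: "\<bar>H s q\<bar> \<le> CK * W q" if s: "s \<in> {0..T}" and q: "0 \<le> q" for s q
    unfolding H_def W_def using sint_bound[OF fin[OF q], of "KU s" CK] bmK[OF s] KUB[OF s]
    unfolding bdd_meas_def by blast
  have HiA: "set_integrable lborel A (H s)" if s: "s \<in> {0..T}" and A: "A \<in> sets borel" "A \<subseteq> {0..T}" for s A
    unfolding H_def using Hi[OF s] by (rule set_integrable_subset) (use A in auto)
  have Gdiff: "G s r2 - G s r1 = (\<integral>q\<in>{r1<..r2}. H s q \<partial>lborel)"
    if s: "s \<in> {0..T}" and r: "0 \<le> r1" "r1 \<le> r2" "r2 \<le> T" for s r1 r2
  proof -
    have un: "{0..r2} = {0..r1} \<union> {r1<..r2}" using r by auto
    have "(\<integral>q\<in>{0..r2}. H s q \<partial>lborel) = (\<integral>q\<in>{0..r1}. H s q \<partial>lborel) + (\<integral>q\<in>{r1<..r2}. H s q \<partial>lborel)"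
      unfolding un by (rule set_integral_Un) (use r in \<open>auto intro!: HiA[OF s]\<close>)
    then show ?thesis using eqn[OF s, of r1] eqn[OF s, of r2] r unfolding G_def H_def by auto
  qed
  have GiA: "set_integrable lborel {a<..b} (G s)" if s: "s \<in> {0..T}" and ab: "0 \<le> a" "b \<le> T" for s a b
  proof -
    have "set_integrable lborel {a..b} (G s)"
      unfolding set_integrable_def G_def
      by (rule borel_integrable_compact) (use ab in \<open>auto intro: continuous_on_subset[OF Gc[OF s]]\<close>)
    then show ?thesis by (rule set_integrable_subset) auto
  qed
  have Dbound: "\<bar>(U b x - U a x) / (b - a)\<bar> \<le> CU" if ab: "0 \<le> a" "a < b" "b \<le> T" for a b x
  proof -
    obtain \<xi> where \<xi>: "\<xi> \<in> {a<..<b}" "U b x - U a x = Ut \<xi> x * (b - a)" using MV_U[OF deriv ab] by blast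
    then have "(U b x - U a x) / (b - a) = Ut \<xi> x" using ab by simp
    then show ?thesis using UtB[of \<xi> x] \<xi>(1) ab by auto
  qed
  have bmD: "bdd_meas (\<lambda>x. (U b x - U a x) / (b - a))" if ab: "0 \<le> a" "a < b" "b \<le> T" for a b
    unfolding bdd_meas_def using Dbound[OF ab] mU[of a] mU[of b] ab by auto
  have bmU: "bdd_meas (U s)" if s: "s \<in> {0..T}" for s
    unfolding bdd_meas_def using mU[OF s] UB[OF s] by blast
  have Dq: "(G b q - G a q) / (b - a) = sint (\<mu>t q) (\<lambda>x. (U b x - U a x) / (b - a))"
    if ab: "0 \<le> a" "a < b" "b \<le> T" and q: "0 \<le> q" for a b q
    unfolding G_def sint_divide using sint_diff[OF fin[OF q] bmU[of b] bmU[of a]] ab by simp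
  have Dqb: "\<bar>(G b q - G a q) / (b - a)\<bar> \<le> CU * W q"
    if ab: "0 \<le> a" "a < b" "b \<le> T" and q: "0 \<le> q" for a b q
    unfolding Dq[OF ab q] W_def using sint_bound[OF fin[OF q], of "\<lambda>x. (U b x - U a x) / (b - a)" CU] bmD[OF ab] Dbound[OF ab]
    unfolding bdd_meas_def by blast
  have phib: "\<bar>\<phi> a b q\<bar> \<le> (CK + CU) * W q" if ab: "0 \<le> a" "a < b" "b \<le> T" and q: "q \<in> {a<..b}" for a b q
  proof -
    have q0: "0 \<le> q" using q ab by auto
    define \<alpha> where "\<alpha> = (q - a) / (b - a)"
    have al: "0 \<le> \<alpha>" "\<alpha> \<le> 1" using q ab by (auto simp: \<alpha>_def field_simps)
    have al2: "(b - q) / (b - a) = 1 - \<alpha>" using ab by (simp add: \<alpha>_def field_simps)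
    have tri: "\<And>x y z::real. \<bar>x + y + z\<bar> \<le> \<bar>x\<bar> + \<bar>y\<bar> + \<bar>z\<bar>" by linarith
    have "\<bar>\<phi> a b q\<bar> \<le> \<bar>\<alpha> * H b q\<bar> + \<bar>(1 - \<alpha>) * H a q\<bar> + \<bar>(G b q - G a q) / (b - a)\<bar>"
      unfolding \<phi>_def al2 \<alpha>_def[symmetric] by (rule tri)
    also have "\<dots> = \<alpha> * \<bar>H b q\<bar> + (1 - \<alpha>) * \<bar>H a q\<bar> + \<bar>(G b q - G a q) / (b - a)\<bar>"
      using al by (simp add: abs_mult)
    also have "\<dots> \<le> \<alpha> * (CK * W q) + (1 - \<alpha>) * (CK * W q) + CU * W q"
    proof (rule add_mono[OF add_mono])
      show "\<alpha> * \<bar>H b q\<bar> \<le> \<alpha> * (CK * W q)" using al Hb[of b q] ab q0 by (intro mult_left_mono) auto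
      show "(1 - \<alpha>) * \<bar>H a q\<bar> \<le> (1 - \<alpha>) * (CK * W q)" using al Hb[of a q] ab q0 by (intro mult_left_mono) auto
      show "\<bar>(G b q - G a q) / (b - a)\<bar> \<le> CU * W q" using Dqb[OF ab q0] .
    qed
    also have "\<dots> = (CK + CU) * W q" by (simp add: algebra_simps)
    finally show ?thesis .
  qed
  have piece_int: "set_integrable lborel {a<..b} (\<phi> a b)" if ab: "0 \<le> a" "a < b" "b \<le> T" for a b
  proof -
    have i1: "set_integrable lborel {a<..b} (\<lambda>q. (q - a) / (b - a) * H b q)"
      by (rule set_integrable_bdd_factor[where C=1, OF HiA[of b]]) (use ab in \<open>auto simp: field_simps\<close>)
    have i2: "set_integrable lborel {a<..b} (\<lambda>q. (b - q) / (b - a) * H a q)"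
      by (rule set_integrable_bdd_factor[where C=1, OF HiA[of a]]) (use ab in \<open>auto simp: field_simps\<close>)
    have i3: "set_integrable lborel {a<..b} (\<lambda>q. (G b q - G a q) / (b - a))"
      using GiA[of b a b] GiA[of a a b] ab by (intro set_integrable_divide set_integral_diff(1)) auto
    show ?thesis unfolding \<phi>_def using i1 i2 i3 by (intro set_integral_add(1))
  qed
  have piece_eq: "(\<integral>q\<in>{a<..b}. \<phi> a b q \<partial>lborel) = G b b - G a a" if ab: "0 \<le> a" "a < b" "b \<le> T" for a b
  proof -
    have Hbi: "set_integrable lborel {a<..b} (H b)" using ab by (intro HiA) auto
    have Hai: "set_integrable lborel {a<..b} (H a)" using ab by (intro HiA) auto
    have j1: "set_integrable lborel {a<..b} (\<lambda>q. (q - a) * H b q)"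
      by (rule set_integrable_bdd_factor[where C="b - a", OF Hbi]) (use ab in auto)
    have j2: "set_integrable lborel {a<..b} (\<lambda>q. (b - q) * H a q)"
      by (rule set_integrable_bdd_factor[where C="b - a", OF Hai]) (use ab in auto)
    have j3: "set_integrable lborel {a<..b} (\<lambda>q. G b q - G a q)"
      using GiA[of b a b] GiA[of a a b] ab by (intro set_integral_diff(1)) auto
    have k1: "set_integrable lborel {a<..b} (\<lambda>r. G b b - G b r)"
      using set_integrable_const_Ioc GiA[of b a b] ab by (intro set_integral_diff(1)) auto
    have k2: "set_integrable lborel {a<..b} (\<lambda>r. G a r - G a a)"
      using set_integrable_const_Ioc GiA[of a a b] ab by (intro set_integral_diff(1)) auto
    have I1: "(\<integral>q\<in>{a<..b}. (q - a) * H b q \<partial>lborel) = (\<integral>r\<in>{a<..b}. G b b - G b r \<partial>lborel)"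
    proof -
      have "(\<integral>q\<in>{a<..b}. (q - a) * H b q \<partial>lborel) = (\<integral>r\<in>{a<..b}. (\<integral>q\<in>{r<..b}. H b q \<partial>lborel) \<partial>lborel)"
        using tri1[OF Hbi ab(2)] by simp
      also have "\<dots> = (\<integral>r\<in>{a<..b}. G b b - G b r \<partial>lborel)"
        by (rule set_lebesgue_integral_cong) (use ab Gdiff[of b] in auto)
      finally show ?thesis .
    qed
    have I2: "(\<integral>q\<in>{a<..b}. (b - q) * H a q \<partial>lborel) = (\<integral>r\<in>{a<..b}. G a r - G a a \<partial>lborel)"
    proof -
      have "(\<integral>q\<in>{a<..b}. (b - q) * H a q \<partial>lborel) = (\<integral>r\<in>{a<..b}. (\<integral>q\<in>{a<..r}. H a q \<partial>lborel) \<partial>lborel)"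
        using tri2[OF Hai ab(2)] by simp
      also have "\<dots> = (\<integral>r\<in>{a<..b}. G a r - G a a \<partial>lborel)"
        by (rule set_lebesgue_integral_cong) (use ab Gdiff[of a] in auto)
      finally show ?thesis .
    qed
    have "(\<integral>q\<in>{a<..b}. \<phi> a b q \<partial>lborel) = (\<integral>q\<in>{a<..b}. ((q - a) * H b q + (b - q) * H a q + (G b q - G a q)) / (b - a) \<partial>lborel)"
      by (rule set_lebesgue_integral_cong) (auto simp: \<phi>_def add_divide_distrib)
    also have "\<dots> = ((\<integral>q\<in>{a<..b}. (q - a) * H b q \<partial>lborel) + (\<integral>q\<in>{a<..b}. (b - q) * H a q \<partial>lborel)
        + (\<integral>q\<in>{a<..b}. G b q - G a q \<partial>lborel)) / (b - a)"
      using j1 j2 j3 by (simp add: set_integral_add(2) set_integral_add(1))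
    also have "\<dots> = ((\<integral>r\<in>{a<..b}. G b b - G b r \<partial>lborel) + (\<integral>r\<in>{a<..b}. G a r - G a a \<partial>lborel)
        + (\<integral>r\<in>{a<..b}. G b r - G a r \<partial>lborel)) / (b - a)" unfolding I1 I2 ..
    also have "\<dots> = (\<integral>r\<in>{a<..b}. G b b - G a a \<partial>lborel) / (b - a)"
    proof -
      have "(\<integral>r\<in>{a<..b}. ((G b b - G b r) + (G a r - G a a)) + (G b r - G a r) \<partial>lborel)
          = (\<integral>r\<in>{a<..b}. (G b b - G b r) + (G a r - G a a) \<partial>lborel) + (\<integral>r\<in>{a<..b}. G b r - G a r \<partial>lborel)"
        by (rule set_integral_add(2)[OF set_integral_add(1)[OF k1 k2] j3])
      also have "(\<integral>r\<in>{a<..b}. (G b b - G b r) + (G a r - G a a) \<partial>lborel)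
          = (\<integral>r\<in>{a<..b}. G b b - G b r \<partial>lborel) + (\<integral>r\<in>{a<..b}. G a r - G a a \<partial>lborel)"
        by (rule set_integral_add(2)[OF k1 k2])
      finally have e1: "(\<integral>r\<in>{a<..b}. ((G b b - G b r) + (G a r - G a a)) + (G b r - G a r) \<partial>lborel)
          = (\<integral>r\<in>{a<..b}. G b b - G b r \<partial>lborel) + (\<integral>r\<in>{a<..b}. G a r - G a a \<partial>lborel) + (\<integral>r\<in>{a<..b}. G b r - G a r \<partial>lborel)" .
      have e2: "(\<integral>r\<in>{a<..b}. ((G b b - G b r) + (G a r - G a a)) + (G b r - G a r) \<partial>lborel) = (\<integral>r\<in>{a<..b}. G b b - G a a \<partial>lborel)"
        by (rule set_lebesgue_integral_cong) auto
      show ?thesis using e1 e2 by simp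
    qed
    also have "\<dots> = G b b - G a a" using ab by (simp add: set_integral_const)
    finally show ?thesis .
  qed
  have conv: "(\<lambda>m. \<phi> (lo m) (hi m) q) \<longlonglongrightarrow> g q"
    if q: "0 < q" "q \<le> T" and lh: "\<And>m. 0 \<le> lo m \<and> lo m < q \<and> q \<le> hi m \<and> hi m \<le> T"
      and lo: "lo \<longlonglongrightarrow> q" and hi: "hi \<longlonglongrightarrow> q" for lo hi q
  proof -
    have q0: "0 \<le> q" using q by simp
    have qT: "q \<in> {0..T}" using q by simp
    have lhT: "lo m \<in> {0..T}" "hi m \<in> {0..T}" for m using lh[of m] q by auto
    have Hconv: "(\<lambda>m. H (s m) q) \<longlonglongrightarrow> H q q" if sT: "\<And>m. s m \<in> {0..T}" and sl: "s \<longlonglongrightarrow> q" for s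
      unfolding H_def
    proof (rule sint_tendsto[OF fin[OF q0], where B=CK])
      show "\<And>m. KU (s m) \<in> borel_measurable borel" using bmK[OF sT] unfolding bdd_meas_def by blast
      show "\<And>m x. \<bar>KU (s m) x\<bar> \<le> CK" using KUB[OF sT] by blast
      fix x
      have "((\<lambda>m. (\<lambda>(s,x). KU s x) (s m, x)) \<longlongrightarrow> (\<lambda>(s,x). KU s x) (q, x)) sequentially"
        by (rule continuous_on_tendsto_compose[OF KUc]) (use sl sT qT in \<open>auto intro!: tendsto_Pair\<close>)
      then show "(\<lambda>m. KU (s m) x) \<longlonglongrightarrow> KU q x" by simp
    qed
    have Hhi: "(\<lambda>m. H (hi m) q) \<longlonglongrightarrow> H q q" using Hconv[of hi] lhT hi by blast
    have Hlo: "(\<lambda>m. H (lo m) q) \<longlonglongrightarrow> H q q" using Hconv[of lo] lhT lo by blast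
    have ab: "0 \<le> lo m" "lo m < hi m" "hi m \<le> T" for m using lh[of m] by auto
    have Vpart: "(\<lambda>m. (G (hi m) q - G (lo m) q) / (hi m - lo m)) \<longlonglongrightarrow> sint (\<mu>t q) (Ut q)"
    proof -
      have "(\<lambda>m. sint (\<mu>t q) (\<lambda>x. (U (hi m) x - U (lo m) x) / (hi m - lo m))) \<longlonglongrightarrow> sint (\<mu>t q) (Ut q)"
      proof (rule sint_tendsto[OF fin[OF q0], where B=CU])
        show "\<And>m. (\<lambda>x. (U (hi m) x - U (lo m) x) / (hi m - lo m)) \<in> borel_measurable borel"
          using bmD[OF ab] unfolding bdd_meas_def by blast
        show "\<And>m x. \<bar>(U (hi m) x - U (lo m) x) / (hi m - lo m)\<bar> \<le> CU" using Dbound[OF ab] by blast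
        fix x
        have ex: "\<forall>m. \<exists>\<xi>. \<xi> \<in> {lo m<..<hi m} \<and> U (hi m) x - U (lo m) x = Ut \<xi> x * (hi m - lo m)"
          using MV_U[OF deriv ab] by blast
        from choice[OF ex] obtain \<xi> where \<xi>: "\<And>m. \<xi> m \<in> {lo m<..<hi m} \<and> U (hi m) x - U (lo m) x = Ut (\<xi> m) x * (hi m - lo m)"
          by blast
        have \<xi>l: "\<xi> \<longlonglongrightarrow> q"
          by (rule tendsto_sandwich[OF _ _ lo hi]) (use \<xi> in \<open>auto intro!: always_eventually less_imp_le\<close>)
        have \<xi>T: "\<xi> m \<in> {0..T}" for m using \<xi>[of m] ab[of m] by auto
        have "((\<lambda>m. (\<lambda>(s,x). Ut s x) (\<xi> m, x)) \<longlongrightarrow> (\<lambda>(s,x). Ut s x) (q, x)) sequentially"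
          by (rule continuous_on_tendsto_compose[OF Utc]) (use \<xi>l \<xi>T qT in \<open>auto intro!: tendsto_Pair\<close>)
        moreover have "(U (hi m) x - U (lo m) x) / (hi m - lo m) = Ut (\<xi> m) x" for m
          using \<xi>[of m] ab[of m] by simp
        ultimately show "(\<lambda>m. (U (hi m) x - U (lo m) x) / (hi m - lo m)) \<longlonglongrightarrow> Ut q x" by simp
      qed
      moreover have "(G (hi m) q - G (lo m) q) / (hi m - lo m) = sint (\<mu>t q) (\<lambda>x. (U (hi m) x - U (lo m) x) / (hi m - lo m))" for m
        using Dq[OF ab q0] .
      ultimately show ?thesis by simp
    qed
    define \<alpha> where "\<alpha> m = (q - lo m) / (hi m - lo m)" for m
    have al: "0 \<le> \<alpha> m" "\<alpha> m \<le> 1" for m using lh[of m] by (auto simp: \<alpha>_def field_simps)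
    have al2: "(hi m - q) / (hi m - lo m) = 1 - \<alpha> m" for m using ab[of m] by (simp add: \<alpha>_def field_simps)
    have Apart: "(\<lambda>m. \<alpha> m * H (hi m) q + (1 - \<alpha> m) * H (lo m) q) \<longlonglongrightarrow> H q q"
    proof (rule LIM_zero_cancel, rule Lim_null_comparison)
      show "\<forall>\<^sub>F m in sequentially. norm (\<alpha> m * H (hi m) q + (1 - \<alpha> m) * H (lo m) q - H q q)
          \<le> \<bar>H (hi m) q - H q q\<bar> + \<bar>H (lo m) q - H q q\<bar>"
      proof (rule always_eventually, rule allI)
        fix m
        have e: "\<alpha> m * H (hi m) q + (1 - \<alpha> m) * H (lo m) q - H q q = \<alpha> m * (H (hi m) q - H q q) + (1 - \<alpha> m) * (H (lo m) q - H q q)"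
          by (simp add: algebra_simps)
        have "\<bar>\<alpha> m * (H (hi m) q - H q q) + (1 - \<alpha> m) * (H (lo m) q - H q q)\<bar>
            \<le> \<alpha> m * \<bar>H (hi m) q - H q q\<bar> + (1 - \<alpha> m) * \<bar>H (lo m) q - H q q\<bar>"
        proof -
          have "\<bar>\<alpha> m * (H (hi m) q - H q q) + (1 - \<alpha> m) * (H (lo m) q - H q q)\<bar>
              \<le> \<bar>\<alpha> m * (H (hi m) q - H q q)\<bar> + \<bar>(1 - \<alpha> m) * (H (lo m) q - H q q)\<bar>"
            by (rule abs_triangle_ineq)
          also have "\<dots> = \<alpha> m * \<bar>H (hi m) q - H q q\<bar> + (1 - \<alpha> m) * \<bar>H (lo m) q - H q q\<bar>"
            using al[of m] by (simp add: abs_mult)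
          finally show ?thesis .
        qed
        also have "\<dots> \<le> \<bar>H (hi m) q - H q q\<bar> + \<bar>H (lo m) q - H q q\<bar>"
          using al[of m] by (intro add_mono mult_left_le_one_le) auto
        finally show "norm (\<alpha> m * H (hi m) q + (1 - \<alpha> m) * H (lo m) q - H q q)
          \<le> \<bar>H (hi m) q - H q q\<bar> + \<bar>H (lo m) q - H q q\<bar>" unfolding e by simp
      qed
      have "(\<lambda>m. \<bar>H (hi m) q - H q q\<bar> + \<bar>H (lo m) q - H q q\<bar>) \<longlonglongrightarrow> \<bar>H q q - H q q\<bar> + \<bar>H q q - H q q\<bar>"
        by (intro tendsto_intros Hhi Hlo)
      then show "(\<lambda>m. \<bar>H (hi m) q - H q q\<bar> + \<bar>H (lo m) q - H q q\<bar>) \<longlonglongrightarrow> 0" by simp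
    qed
    have "(\<lambda>m. (\<alpha> m * H (hi m) q + (1 - \<alpha> m) * H (lo m) q) + (G (hi m) q - G (lo m) q) / (hi m - lo m))
        \<longlonglongrightarrow> H q q + sint (\<mu>t q) (Ut q)"
      by (rule tendsto_add[OF Apart Vpart])
    moreover have "\<phi> (lo m) (hi m) q = (\<alpha> m * H (hi m) q + (1 - \<alpha> m) * H (lo m) q) + (G (hi m) q - G (lo m) q) / (hi m - lo m)" for m
      unfolding \<phi>_def al2 \<alpha>_def[symmetric] by simp
    moreover have "g q = H q q + sint (\<mu>t q) (Ut q)"
      unfolding g_def H_def using sint_add[OF fin[OF q0] bmUt[OF qT] bmK[OF qT]] by simp
    ultimately show ?thesis by simp
  qed
  define h where "h m = t / real (Suc m)" for m
  define \<tau> where "\<tau> m i = real i * h m" for m i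
  define \<psi> where "\<psi> m q = (\<Sum>i<Suc m. indicator {\<tau> m i<..\<tau> m (Suc i)} q * \<phi> (\<tau> m i) (\<tau> m (Suc i)) q)" for m q
  have h0: "0 < h m" for m using t by (simp add: h_def)
  have \<tau>0: "0 \<le> \<tau> m i" for m i using h0[of m] by (simp add: \<tau>_def)
  have \<tau>lt: "\<tau> m i < \<tau> m (Suc i)" for m i using h0[of m] by (simp add: \<tau>_def algebra_simps)
  have \<tau>mono: "i \<le> j \<Longrightarrow> \<tau> m i \<le> \<tau> m j" for m i j using h0[of m] by (simp add: \<tau>_def mult_right_mono)
  have \<tau>end: "\<tau> m (Suc m) = t" for m using t by (simp add: \<tau>_def h_def)
  have \<tau>le: "i \<le> Suc m \<Longrightarrow> \<tau> m i \<le> t" for m i using \<tau>mono[of i "Suc m" m] \<tau>end[of m] by simp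
  have \<tau>T: "i \<le> Suc m \<Longrightarrow> \<tau> m i \<le> T" for m i using \<tau>le[of i m] t by simp
  have abi: "0 \<le> \<tau> m i" "\<tau> m i < \<tau> m (Suc i)" "\<tau> m (Suc i) \<le> T" if "i < Suc m" for m i
    using \<tau>0 \<tau>lt \<tau>T[of "Suc i" m] that by auto
  have termI: "integrable lborel (\<lambda>q. indicator {\<tau> m i<..\<tau> m (Suc i)} q * \<phi> (\<tau> m i) (\<tau> m (Suc i)) q)"
    if "i < Suc m" for m i
    using piece_int[OF abi[OF that]] unfolding set_integrable_def by simp
  have \<psi>int: "integrable lborel (\<psi> m)" for m
    unfolding \<psi>_def by (intro Bochner_Integration.integrable_sum termI) auto
  have \<psi>eq: "(\<integral>q. \<psi> m q \<partial>lborel) = G t t - G 0 0" for m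
  proof -
    have "(\<integral>q. \<psi> m q \<partial>lborel) = (\<Sum>i<Suc m. \<integral>q. indicator {\<tau> m i<..\<tau> m (Suc i)} q * \<phi> (\<tau> m i) (\<tau> m (Suc i)) q \<partial>lborel)"
      unfolding \<psi>_def by (rule Bochner_Integration.integral_sum) (auto intro: termI)
    also have "\<dots> = (\<Sum>i<Suc m. G (\<tau> m (Suc i)) (\<tau> m (Suc i)) - G (\<tau> m i) (\<tau> m i))"
    proof (rule sum.cong[OF refl])
      fix i assume "i \<in> {..<Suc m}"
      then have i: "i < Suc m" by simp
      show "(\<integral>q. indicator {\<tau> m i<..\<tau> m (Suc i)} q * \<phi> (\<tau> m i) (\<tau> m (Suc i)) q \<partial>lborel) = G (\<tau> m (Suc i)) (\<tau> m (Suc i)) - G (\<tau> m i) (\<tau> m i)"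
        using piece_eq[OF abi[OF i]] unfolding set_lebesgue_integral_def by simp
    qed
    also have "\<dots> = G (\<tau> m (Suc m)) (\<tau> m (Suc m)) - G (\<tau> m 0) (\<tau> m 0)"
      by (rule sum_lessThan_telescope[where f="\<lambda>i. G (\<tau> m i) (\<tau> m i)"])
    also have "\<dots> = G t t - G 0 0" using \<tau>end[of m] by (simp add: \<tau>_def)
    finally show ?thesis .
  qed
  have \<psi>case: "(q \<in> {0<..t} \<longrightarrow> (\<exists>k<Suc m. \<tau> m k < q \<and> q \<le> \<tau> m (Suc k) \<and> \<psi> m q = \<phi> (\<tau> m k) (\<tau> m (Suc k)) q))
      \<and> (q \<notin> {0<..t} \<longrightarrow> \<psi> m q = 0)" for m q
  proof (intro conjI impI)
    assume q: "q \<in> {0<..t}"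
    obtain k where k: "k < Suc m" "real k * (t / real (Suc m)) < q" "q \<le> real (Suc k) * (t / real (Suc m))"
      using index_exists[OF t(1), of "Suc m" q] q by auto
    have kk: "\<tau> m k < q" "q \<le> \<tau> m (Suc k)" using k unfolding \<tau>_def h_def by auto
    have "\<psi> m q = indicator {\<tau> m k<..\<tau> m (Suc k)} q * \<phi> (\<tau> m k) (\<tau> m (Suc k)) q"
      unfolding \<psi>_def
    proof (rule sum_single[OF k(1)])
      fix i assume i: "i < Suc m" "i \<noteq> k"
      have "q \<notin> {\<tau> m i<..\<tau> m (Suc i)}"
      proof (cases "i < k")
        case True
        then have "\<tau> m (Suc i) \<le> \<tau> m k" by (intro \<tau>mono) simp
        then show ?thesis using kk by auto
      next
        case False
        then have "\<tau> m (Suc k) \<le> \<tau> m i" using i by (intro \<tau>mono) simp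
        then show ?thesis using kk by auto
      qed
      then show "indicator {\<tau> m i<..\<tau> m (Suc i)} q * \<phi> (\<tau> m i) (\<tau> m (Suc i)) q = 0" by simp
    qed
    then show "\<exists>k<Suc m. \<tau> m k < q \<and> q \<le> \<tau> m (Suc k) \<and> \<psi> m q = \<phi> (\<tau> m k) (\<tau> m (Suc k)) q"
      using k(1) kk by (intro exI[of _ k]) auto
  next
    assume q: "q \<notin> {0<..t}"
    show "\<psi> m q = 0" unfolding \<psi>_def
    proof (rule sum.neutral, rule ballI)
      fix i assume "i \<in> {..<Suc m}"
      then have "\<tau> m (Suc i) \<le> t" using \<tau>le[of "Suc i" m] by simp
      then have "q \<notin> {\<tau> m i<..\<tau> m (Suc i)}" using q \<tau>0[of m i] by auto
      then show "indicator {\<tau> m i<..\<tau> m (Suc i)} q * \<phi> (\<tau> m i) (\<tau> m (Suc i)) q = 0" by simp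
    qed
  qed
  define g' where "g' q = indicator {0<..t} q * g q" for q
  define w where "w q = (CK + CU) * (indicator {0..T} q * W q)" for q
  have \<psi>b: "norm (\<psi> m q) \<le> w q" for m q
  proof (cases "q \<in> {0<..t}")
    case True
    then obtain k where k: "k < Suc m" "\<tau> m k < q" "q \<le> \<tau> m (Suc k)" "\<psi> m q = \<phi> (\<tau> m k) (\<tau> m (Suc k)) q"
      using \<psi>case[of q m] by blast
    have "\<bar>\<phi> (\<tau> m k) (\<tau> m (Suc k)) q\<bar> \<le> (CK + CU) * W q"
      by (rule phib[OF abi[OF k(1)]]) (use k in auto)
    then show ?thesis using k(4) True t by (simp add: w_def)
  next
    case False
    then have "\<psi> m q = 0" using \<psi>case[of q m] by blast
    moreover have "0 \<le> w q" using CK0 CU0 W0[of q] by (auto simp: w_def indicator_def)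
    ultimately show ?thesis by simp
  qed
  have hlim: "h \<longlonglongrightarrow> 0"
    unfolding h_def using LIMSEQ_Suc[OF lim_const_over_n[of t]] by simp
  have \<psi>lim: "(\<lambda>m. \<psi> m q) \<longlonglongrightarrow> g' q" for q
  proof (cases "q \<in> {0<..t}")
    case True
    have ex: "\<forall>m. \<exists>k. k < Suc m \<and> \<tau> m k < q \<and> q \<le> \<tau> m (Suc k) \<and> \<psi> m q = \<phi> (\<tau> m k) (\<tau> m (Suc k)) q"
      using \<psi>case[of q] True by blast
    from choice[OF ex] obtain k where k: "\<And>m. k m < Suc m \<and> \<tau> m (k m) < q \<and> q \<le> \<tau> m (Suc (k m)) \<and> \<psi> m q = \<phi> (\<tau> m (k m)) (\<tau> m (Suc (k m))) q"
      by blast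
    define lo where "lo m = \<tau> m (k m)" for m
    define hi where "hi m = \<tau> m (Suc (k m))" for m
    have hl: "hi m - lo m = h m" for m by (simp add: hi_def lo_def \<tau>_def algebra_simps)
    have lh: "0 \<le> lo m \<and> lo m < q \<and> q \<le> hi m \<and> hi m \<le> T" for m
      using k[of m] \<tau>0 \<tau>T[of "Suc (k m)" m] unfolding lo_def hi_def by auto
    have lol: "lo \<longlonglongrightarrow> q"
    proof (rule LIM_zero_cancel, rule Lim_null_comparison[OF _ hlim])
      show "\<forall>\<^sub>F m in sequentially. norm (lo m - q) \<le> h m"
        using lh hl by (intro always_eventually allI) (smt (verit) real_norm_def)
    qed
    have hil: "hi \<longlonglongrightarrow> q"
    proof (rule LIM_zero_cancel, rule Lim_null_comparison[OF _ hlim])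
      show "\<forall>\<^sub>F m in sequentially. norm (hi m - q) \<le> h m"
        using lh hl by (intro always_eventually allI) (smt (verit) real_norm_def)
    qed
    have "(\<lambda>m. \<phi> (lo m) (hi m) q) \<longlonglongrightarrow> g q"
      by (rule conv[OF _ _ lh lol hil]) (use True t in auto)
    moreover have "\<psi> m q = \<phi> (lo m) (hi m) q" for m using k[of m] by (simp add: lo_def hi_def)
    ultimately show ?thesis using True by (simp add: g'_def)
  next
    case False
    then have "\<psi> m q = 0" for m using \<psi>case[of q m] by blast
    then show ?thesis using False by (simp add: g'_def)
  qed
  have \<psi>m: "\<psi> m \<in> borel_measurable lborel" for m using \<psi>int[of m] by (rule borel_measurable_integrable)
  have g'm: "g' \<in> borel_measurable lborel" using \<psi>lim \<psi>m by (rule borel_measurable_LIMSEQ_real)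
  have wi: "integrable lborel w"
  proof -
    have "integrable lborel (\<lambda>q. indicator {0..T} q *\<^sub>R W q)" using tvi unfolding set_integrable_def W_def .
    then show ?thesis unfolding w_def by simp
  qed
  have lim1: "(\<lambda>m. \<integral>q. \<psi> m q \<partial>lborel) \<longlonglongrightarrow> (\<integral>q. g' q \<partial>lborel)"
    by (rule integral_dominated_convergence[where s=\<psi>, OF g'm \<psi>m wi]) (use \<psi>lim \<psi>b in auto)
  have g'i: "integrable lborel g'"
    by (rule integrable_dominated_convergence[where s=\<psi>, OF g'm \<psi>m wi]) (use \<psi>lim \<psi>b in auto)
  have g'eq: "(\<integral>q. g' q \<partial>lborel) = G t t - G 0 0"
    using lim1 unfolding \<psi>eq by (rule LIMSEQ_unique[OF tendsto_const, symmetric])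
  have decomp: "indicator {0..t} q *\<^sub>R g q = g' q + indicator {0} q * g 0" for q
    using t by (auto simp: g'_def indicator_def)
  have i0: "integrable lborel (\<lambda>q. indicator {0::real} q * g 0)"
    by (intro integrable_mult_left integrable_real_indicator) auto
  have si: "set_integrable lborel {0..t} g"
    unfolding set_integrable_def decomp using g'i i0 by (rule Bochner_Integration.integrable_add)
  have "(\<integral>s\<in>{0..t}. g s \<partial>lborel) = (\<integral>q. g' q \<partial>lborel) + (\<integral>q. indicator {0::real} q * g 0 \<partial>lborel)"
    unfolding set_lebesgue_integral_def decomp using g'i i0 by (rule Bochner_Integration.integral_add)
  also have "(\<integral>q. indicator {0::real} q * g 0 \<partial>lborel) = 0" by simp
  finally have "(\<integral>s\<in>{0..t}. g s \<partial>lborel) = G t t - G 0 0" using g'eq by simp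
  then show ?thesis using si unfolding g_def G_def by simp
qed



lemma null_point_integral:
  fixes f :: "real \<Rightarrow> real"
  shows "set_integrable lborel {0..0} f" "(\<integral>s\<in>{0..0}. f s \<partial>lborel) = 0"
proof -
  have e: "(\<lambda>x. indicator {0..0::real} x *\<^sub>R f x) = (\<lambda>x. indicator {0::real} x * f 0)"
    by (auto simp: indicator_def fun_eq_iff)
  have i: "integrable lborel (\<lambda>x. indicator {0::real} x * f 0)"
    by (intro integrable_mult_left integrable_real_indicator) auto
  show "set_integrable lborel {0..0} f" unfolding set_integrable_def e using i .
  show "(\<integral>s\<in>{0..0}. f s \<partial>lborel) = 0" unfolding set_lebesgue_integral_def e by simp
qed

theorem lemma3p4:
  fixes \<pi> :: "real \<Rightarrow> 'a::{real_inner, complete_space, second_countable_topology} \<Rightarrow> 'a measure"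
    and \<mu> :: "'a smeasure" and \<mu>t :: "real \<Rightarrow> 'a smeasure"
    and T :: real and u ut :: "real \<Rightarrow> 'a \<Rightarrow> real"
  assumes sg: "sc_markov_semigroup \<pi>"
    and mu: "fin_smeasure \<mu>"
    and sol: "measure_eq_solution \<pi> \<mu> \<mu>t"
    and T: "T > 0"
    and u_Cb: "u \<in> CbT T"
    and u_DK: "\<forall>t\<in>{0..T}. u t \<in> DK \<pi>"
    and Ku_cont: "continuous_on ({0..T} \<times> UNIV) (\<lambda>(t,x). Kgen \<pi> (u t) x)"
    and Ku_bdd: "bounded ((\<lambda>(t,x). Kgen \<pi> (u t) x) ` ({0..T} \<times> UNIV))"
    and u_deriv: "\<forall>x. \<forall>t\<in>{0..T}. ((\<lambda>s. u s x) has_real_derivative ut t x) (at t within {0..T})"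
    and ut_cont: "continuous_on ({0..T} \<times> UNIV) (\<lambda>(t,x). ut t x)"
    and ut_bdd: "bounded ((\<lambda>(t,x). ut t x) ` ({0..T} \<times> UNIV))"
  shows "abs_cont_on 0 T (\<lambda>t. sint (\<mu>t t) (u t))
       \<and> (\<forall>t\<in>{0..T}.
            set_integrable lborel {0..t} (\<lambda>s. sint (\<mu>t s) (\<lambda>x. ut s x + Kgen \<pi> (u s) x))
          \<and> sint (\<mu>t t) (u t) - sint \<mu> (u 0)
              = (\<integral>s\<in>{0..t}. sint (\<mu>t s) (\<lambda>x. ut s x + Kgen \<pi> (u s) x) \<partial>lborel))"
proof -
  define F where "F t = sint (\<mu>t t) (u t)" for t
  define g where "g s = sint (\<mu>t s) (\<lambda>x. ut s x + Kgen \<pi> (u s) x)" for s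
  have fin: "\<And>r. 0 \<le> r \<Longrightarrow> fin_smeasure (\<mu>t r)" using sol unfolding measure_eq_solution_def by blast
  have tvi: "set_integrable lborel {0..T} (\<lambda>r. tv (\<mu>t r))" using sol T unfolding measure_eq_solution_def by blast
  have solK: "\<And>\<phi>. \<phi> \<in> DK \<pi> \<Longrightarrow> (\<forall>T'>0. abs_cont_on 0 T' (\<lambda>t. sint (\<mu>t t) \<phi>))
      \<and> (\<forall>t\<ge>0. set_integrable lborel {0..t} (\<lambda>s. sint (\<mu>t s) (Kgen \<pi> \<phi>))
             \<and> sint (\<mu>t t) \<phi> - sint \<mu> \<phi> = (\<integral>s\<in>{0..t}. sint (\<mu>t s) (Kgen \<pi> \<phi>) \<partial>lborel))"
    using sol unfolding measure_eq_solution_def by blast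
  have uDK: "\<And>s. s \<in> {0..T} \<Longrightarrow> u s \<in> DK \<pi>" using u_DK by blast
  have Hi: "\<And>s. s \<in> {0..T} \<Longrightarrow> set_integrable lborel {0..T} (\<lambda>q. sint (\<mu>t q) (Kgen \<pi> (u s)))"
    using solK[OF uDK] T by auto
  have eqn: "\<And>s r. s \<in> {0..T} \<Longrightarrow> r \<in> {0..T} \<Longrightarrow>
      sint (\<mu>t r) (u s) = sint \<mu> (u s) + (\<integral>q\<in>{0..r}. sint (\<mu>t q) (Kgen \<pi> (u s)) \<partial>lborel)"
    using solK[OF uDK] by force
  have Gc: "\<And>s. s \<in> {0..T} \<Longrightarrow> continuous_on {0..T} (\<lambda>r. sint (\<mu>t r) (u s))"
    using solK[OF uDK] T abs_cont_continuous by blast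
  have Uc: "\<And>s. s \<in> {0..T} \<Longrightarrow> continuous_on UNIV (u s)"
    using uDK unfolding DK_def Cb_def by (auto intro: uniformly_continuous_imp_continuous)
  obtain CUU where UB: "\<And>s x. s \<in> {0..T} \<Longrightarrow> \<bar>u s x\<bar> \<le> CUU"
    using u_Cb unfolding CbT_def bounded_real by fastforce
  obtain CU where UtB: "\<And>s x. s \<in> {0..T} \<Longrightarrow> \<bar>ut s x\<bar> \<le> CU"
    using ut_bdd unfolding bounded_real by fastforce
  obtain CK where KUB: "\<And>s x. s \<in> {0..T} \<Longrightarrow> \<bar>Kgen \<pi> (u s) x\<bar> \<le> CK"
    using Ku_bdd unfolding bounded_real by fastforce
  have core': "set_integrable lborel {0..t} g \<and> F t - F 0 = (\<integral>s\<in>{0..t}. g s \<partial>lborel)"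
    if t: "0 < t" "t \<le> T" for t
    using core[of \<mu>t T "\<lambda>s. Kgen \<pi> (u s)" u "\<lambda>s. sint \<mu> (u s)" CUU ut CU CK t, OF fin tvi Hi eqn Gc Uc UB ut_cont UtB Ku_cont KUB u_deriv t]
    unfolding F_def g_def by simp
  have F0: "F 0 = sint \<mu> (u 0)" using eqn[of 0 0] T null_point_integral unfolding F_def by simp
  have key: "set_integrable lborel {0..t} g \<and> F t - F 0 = (\<integral>s\<in>{0..t}. g s \<partial>lborel)" if t: "t \<in> {0..T}" for t
  proof (cases "t = 0")
    case True then show ?thesis using null_point_integral[of g] by simp
  next
    case False then show ?thesis using core' t by auto
  qed
  have ac: "abs_cont_on 0 T F"
  proof (rule abs_cont_from_integral[where g=g])
    show "set_integrable lborel {0..T} g" using key[of T] T by auto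
    fix x :: real assume x: "x \<in> {0..T}"
    show "F x = F 0 + (\<integral>s\<in>{0..x}. g s \<partial>lborel)" using key[OF x] by (simp add: algebra_simps)
  qed
  show ?thesis using ac key F0 unfolding F_def g_def by auto
qed


end
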